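(* Let $G$ be a graph with a hole cover $\mathcal C$ satisfying the NC property in $G$, and let $u,w\in\mathcal C$ be adjacent in $G$. Then there is no vertex $v$ such that both $uv$ and $wv$ are newly added edges, i.e. both belong to $E(\widehat G(\mathcal C))\setminus E(G)$.
   Context: All graphs are finite and simple. A hole of $G$ is an induced cycle of length at least $4$; $\mathcal H(G)$ is the set of holes of $G$ and $\mathcal H(G,u)$ the set of holes containing $u$. A hole cover of $G$ is a nonempty $X\subseteq V(G)$ meeting every hole. A vertex $u$ satisfies the NC property in $G$ if there are no holes $H\in\mathcal H(G,u)$, $H'\in\mathcal H(G)\setminus\mathcal H(G,u)$ sharing two consecutive edges (two distinct edges with a common end vertex lying on both). A set $\mathcal C$ satisfies the NC property in $G$ if each of its vertices does and every hole contains at most one vertex of $\mathcal C$. Locally chordalizing all holes in $\mathcal H(G,u)$ by $u$ means adding all edges $uw$ with $w\ne u$ lying on some hole in $\mathcal H(G,u)$. For a hole cover $\mathcal C=\{u_1,\dots,u_k\}$ satisfying the NC property in $G$, set $G_0=G$, let $G_i$ be obtained from $G_{i-1}$ by locally chordalizing all holes in $\mathcal H(G_{i-1},u_i)$ by $u_i$, and put $\widehat G(\mathcal C)=G_k$ (this graph is chordal and independent of the ordering of $\mathcal C$). Edges of $\widehat G(\mathcal C)$ not in $G$ are called newly added edges. *)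

theory Defs
  imports Main
begin

definition simple_graph :: "'a set \<Rightarrow> 'a set set \<Rightarrow> bool" where
  "simple_graph V E \<longleftrightarrow> finite V \<and>
     (\<forall>e\<in>E. \<exists>x y. e = {x, y} \<and> x \<noteq> y \<and> x \<in> V \<and> y \<in> V)"

text \<open>A hole (induced cycle of length at least 4), identified by its vertex set:
  there is a cyclic enumeration xs of H in which two vertices are adjacent in G
  iff they are cyclically consecutive.\<close>
definition is_hole :: "'a set \<Rightarrow> 'a set set \<Rightarrow> 'a set \<Rightarrow> bool" where
  "is_hole V E H \<longleftrightarrow> (\<exists>xs. distinct xs \<and> length xs \<ge> 4 \<and> set xs = H \<and> H \<subseteq> V \<and>
     (\<forall>i < length xs. \<forall>j < length xs.
        {xs ! i, xs ! j} \<in> E \<longleftrightarrow>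
          (j = Suc i mod length xs \<or> i = Suc j mod length xs)))"

definition holes :: "'a set \<Rightarrow> 'a set set \<Rightarrow> 'a set set" where
  "holes V E = {H. is_hole V E H}"

definition holes_at :: "'a set \<Rightarrow> 'a set set \<Rightarrow> 'a \<Rightarrow> 'a set set" where
  "holes_at V E u = {H \<in> holes V E. u \<in> H}"

text \<open>Edges of a hole (holes are induced, so these are the edges of G inside H).\<close>
definition hole_edges :: "'a set set \<Rightarrow> 'a set \<Rightarrow> 'a set set" where
  "hole_edges E H = {e \<in> E. e \<subseteq> H}"

definition hole_cover :: "'a set \<Rightarrow> 'a set set \<Rightarrow> 'a set \<Rightarrow> bool" where
  "hole_cover V E X \<longleftrightarrow> X \<noteq> {} \<and> X \<subseteq> V \<and> (\<forall>H \<in> holes V E. H \<inter> X \<noteq> {})"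

definition share_consec_edges :: "'a set set \<Rightarrow> 'a set \<Rightarrow> 'a set \<Rightarrow> bool" where
  "share_consec_edges E H H' \<longleftrightarrow> (\<exists>x y z. x \<noteq> z \<and>
     {x, y} \<in> hole_edges E H \<inter> hole_edges E H' \<and>
     {y, z} \<in> hole_edges E H \<inter> hole_edges E H')"

definition NC_vertex :: "'a set \<Rightarrow> 'a set set \<Rightarrow> 'a \<Rightarrow> bool" where
  "NC_vertex V E u \<longleftrightarrow>
     \<not> (\<exists>H \<in> holes_at V E u. \<exists>H' \<in> holes V E - holes_at V E u. share_consec_edges E H H')"

definition NC_set :: "'a set \<Rightarrow> 'a set set \<Rightarrow> 'a set \<Rightarrow> bool" where
  "NC_set V E C \<longleftrightarrow> (\<forall>u \<in> C. NC_vertex V E u) \<and>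
     (\<forall>H \<in> holes V E. card (H \<inter> C) \<le> 1)"

definition local_chordalize :: "'a set \<Rightarrow> 'a set set \<Rightarrow> 'a \<Rightarrow> 'a set set" where
  "local_chordalize V E u =
     E \<union> {{u, w} | w. w \<noteq> u \<and> (\<exists>H \<in> holes_at V E u. w \<in> H)}"

fun chordalize_seq :: "'a set \<Rightarrow> 'a set set \<Rightarrow> 'a list \<Rightarrow> 'a set set" where
  "chordalize_seq V E [] = E"
| "chordalize_seq V E (u # us) = chordalize_seq V (local_chordalize V E u) us"

end

theory Submission
  imports Defs
begin


definition adj :: "'a set set \<Rightarrow> 'a \<Rightarrow> 'a \<Rightarrow> bool" where
  "adj E x y \<longleftrightarrow> {x, y} \<in> E"

lemma adj_sym: "adj E x y = adj E y x"
  by (simp add: adj_def insert_commute)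

definition loopfree :: "'a set set \<Rightarrow> bool" where
  "loopfree E \<longleftrightarrow> (\<forall>x. {x} \<notin> E)"

lemma loopfree_adj: "loopfree E \<Longrightarrow> \<not> adj E x x"
  by (simp add: adj_def loopfree_def)

definition ipath :: "'a set set \<Rightarrow> 'a list \<Rightarrow> bool" where
  "ipath E xs \<longleftrightarrow> distinct xs \<and> (\<forall>i<length xs. \<forall>j<length xs.
      adj E (xs!i) (xs!j) \<longleftrightarrow> (j = Suc i \<or> i = Suc j))"

definition lwalk :: "'a set set \<Rightarrow> 'a list \<Rightarrow> bool" where
  "lwalk E xs \<longleftrightarrow> (\<forall>i. Suc i < length xs \<longrightarrow> xs!i = xs!Suc i \<or> adj E (xs!i) (xs!Suc i))"

lemma ipath_rev: assumes "ipath E xs" shows "ipath E (rev xs)"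
  unfolding ipath_def
proof (intro conjI allI impI)
  show "distinct (rev xs)" using assms by (simp add: ipath_def)
  fix i j assume i: "i < length (rev xs)" and j: "j < length (rev xs)"
  have "adj E (rev xs ! i) (rev xs ! j) = adj E (xs!(length xs - Suc i)) (xs!(length xs - Suc j))"
    using i j by (simp add: rev_nth)
  also have "\<dots> = (length xs - Suc j = Suc (length xs - Suc i) \<or> length xs - Suc i = Suc (length xs - Suc j))"
    using assms i j unfolding ipath_def by auto
  also have "\<dots> = (j = Suc i \<or> i = Suc j)" using i j by auto
  finally show "adj E (rev xs ! i) (rev xs ! j) = (j = Suc i \<or> i = Suc j)" .
qed

lemma ipath_drop: assumes "ipath E xs" shows "ipath E (drop k xs)"
  using assms unfolding ipath_def by (auto simp: distinct_drop)

lemma ipath_take: assumes "ipath E xs" shows "ipath E (take k xs)"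
  using assms unfolding ipath_def by auto

lemma ipath_Cons: "ipath E (x # xs) \<Longrightarrow> ipath E xs"
  using ipath_drop[of E "x#xs" 1] by simp

lemma ipath_append:
  assumes "ipath E xs" "ipath E ys" "set xs \<inter> set ys = {}" "xs \<noteq> []" "ys \<noteq> []"
    "adj E (last xs) (hd ys)"
    "\<And>x y. x \<in> set xs \<Longrightarrow> y \<in> set ys \<Longrightarrow> adj E x y \<Longrightarrow> x = last xs \<and> y = hd ys"
  shows "ipath E (xs @ ys)"
  unfolding ipath_def
proof (intro conjI allI impI)
  show "distinct (xs @ ys)" using assms(1-3) by (simp add: ipath_def)
  fix i j assume i: "i < length (xs @ ys)" and j: "j < length (xs @ ys)"
  let ?n = "length xs"
  have lx: "last xs = xs ! (?n - 1)" using assms(4) by (simp add: last_conv_nth)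
  have hy: "hd ys = ys ! 0" using assms(5) by (simp add: hd_conv_nth)
  have dx: "distinct xs" "distinct ys" using assms(1,2) by (auto simp: ipath_def)
  show "adj E ((xs @ ys) ! i) ((xs @ ys) ! j) = (j = Suc i \<or> i = Suc j)"
  proof (cases "i < ?n"; cases "j < ?n")
    assume "i < ?n" "j < ?n" thus ?thesis using assms(1) by (simp add: nth_append ipath_def)
  next
    assume a: "\<not> i < ?n" "\<not> j < ?n"
    then show ?thesis using assms(2) i j by (auto simp: nth_append ipath_def)
  next
    assume a: "i < ?n" "\<not> j < ?n"
    have xi: "xs ! i \<in> set xs" using a by simp
    have yj: "ys ! (j - ?n) \<in> set ys" using a j by simp
    show ?thesis
    proof
      assume "adj E ((xs @ ys) ! i) ((xs @ ys) ! j)"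
      hence "adj E (xs!i) (ys!(j - ?n))" using a by (simp add: nth_append)
      from assms(7)[OF xi yj this] have "xs!i = xs!(?n-1)" "ys!(j-?n) = ys!0" using lx hy by auto
      moreover have "j - ?n < length ys" using a j by auto
      ultimately have "i = ?n - 1" "j - ?n = 0" using dx a assms(4,5)
        by (metis length_greater_0_conv nth_eq_iff_index_eq diff_less zero_less_one)+
      thus "j = Suc i \<or> i = Suc j" using a by auto
    next
      assume "j = Suc i \<or> i = Suc j"
      hence "i = ?n - 1" "j = ?n" using a by auto
      thus "adj E ((xs @ ys) ! i) ((xs @ ys) ! j)" using assms(4,6) lx hy by (simp add: nth_append)
    qed
  next
    assume a: "\<not> i < ?n" "j < ?n"
    have xi: "xs ! j \<in> set xs" using a by simp
    have yj: "ys ! (i - ?n) \<in> set ys" using a i by simp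
    show ?thesis
    proof
      assume "adj E ((xs @ ys) ! i) ((xs @ ys) ! j)"
      hence "adj E (xs!j) (ys!(i - ?n))" using a by (simp add: nth_append adj_sym)
      from assms(7)[OF xi yj this] have "xs!j = xs!(?n-1)" "ys!(i-?n) = ys!0" using lx hy by auto
      moreover have "i - ?n < length ys" using a i by auto
      ultimately have "j = ?n - 1" "i - ?n = 0" using dx a assms(4,5)
        by (metis length_greater_0_conv nth_eq_iff_index_eq diff_less zero_less_one)+
      thus "j = Suc i \<or> i = Suc j" using a by auto
    next
      assume "j = Suc i \<or> i = Suc j"
      hence "j = ?n - 1" "i = ?n" using a by auto
      thus "adj E ((xs @ ys) ! i) ((xs @ ys) ! j)" using assms(4,6) lx hy by (simp add: nth_append adj_sym)
    qed
  qed
qed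

lemma lwalk_append:
  assumes "lwalk E xs" "lwalk E ys" "xs \<noteq> []" "ys \<noteq> []"
    "last xs = hd ys \<or> adj E (last xs) (hd ys)"
  shows "lwalk E (xs @ ys)"
  unfolding lwalk_def
proof (intro allI impI)
  fix i assume i: "Suc i < length (xs @ ys)"
  let ?n = "length xs"
  have lx: "last xs = xs ! (?n - 1)" using assms(3) by (simp add: last_conv_nth)
  have hy: "hd ys = ys ! 0" using assms(4) by (simp add: hd_conv_nth)
  consider "Suc i < ?n" | "Suc i = ?n" | "i \<ge> ?n" by linarith
  thus "(xs @ ys) ! i = (xs @ ys) ! Suc i \<or> adj E ((xs @ ys) ! i) ((xs @ ys) ! Suc i)"
  proof cases
    case 1 thus ?thesis using assms(1) by (simp add: nth_append lwalk_def)
  next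
    case 2 hence "i = ?n - 1" by simp
    thus ?thesis using 2 assms(5) lx hy by (simp add: nth_append)
  next
    case 3
    hence "Suc (i - ?n) < length ys" using i by auto
    hence "ys ! (i - ?n) = ys ! Suc (i - ?n) \<or> adj E (ys ! (i - ?n)) (ys ! Suc (i - ?n))"
      using assms(2) by (simp add: lwalk_def)
    moreover have "Suc i - ?n = Suc (i - ?n)" using 3 by auto
    ultimately show ?thesis using 3 by (simp add: nth_append)
  qed
qed

lemma lwalk_rev: "lwalk E xs \<Longrightarrow> lwalk E (rev xs)"
  unfolding lwalk_def
proof (intro allI impI)
  fix i assume a: "\<forall>i. Suc i < length xs \<longrightarrow> xs ! i = xs ! Suc i \<or> adj E (xs ! i) (xs ! Suc i)"
    and i: "Suc i < length (rev xs)"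
  let ?k = "length xs - Suc (Suc i)"
  have "Suc ?k < length xs" using i by auto
  hence "xs ! ?k = xs ! Suc ?k \<or> adj E (xs ! ?k) (xs ! Suc ?k)" using a by blast
  moreover have "length xs - Suc i = Suc ?k" using i by auto
  ultimately show "rev xs ! i = rev xs ! Suc i \<or> adj E (rev xs ! i) (rev xs ! Suc i)"
    using i by (auto simp: rev_nth adj_sym)
qed

lemma lwalk_take: "lwalk E xs \<Longrightarrow> lwalk E (take k xs)"
  unfolding lwalk_def by auto

lemma lwalk_drop: "lwalk E xs \<Longrightarrow> lwalk E (drop k xs)"
  unfolding lwalk_def by (auto simp: add.commute)

lemma ipath_lwalk: "ipath E xs \<Longrightarrow> lwalk E xs"
  unfolding lwalk_def ipath_def by auto

lemma lwalk_single: "lwalk E [x]" by (simp add: lwalk_def)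

lemma lwalk_between:
  assumes "lwalk E xs" "i < length xs" "j < length xs"
  shows "\<exists>ws. lwalk E ws \<and> ws \<noteq> [] \<and> hd ws = xs!i \<and> last ws = xs!j \<and> set ws \<subseteq> set xs"
proof (cases "i \<le> j")
  case True
  let ?ws = "take (j - i + 1) (drop i xs)"
  have "lwalk E ?ws" using assms by (intro lwalk_take lwalk_drop)
  moreover have "?ws \<noteq> []" using assms by simp
  moreover have "hd ?ws = xs!i" using assms by (simp add: hd_conv_nth)
  moreover have "last ?ws = xs!j" using assms True by (simp add: last_conv_nth)
  moreover have "set ?ws \<subseteq> set xs" by (meson in_set_dropD in_set_takeD subsetI)
  ultimately show ?thesis by blast
next
  case False
  let ?ws = "rev (take (i - j + 1) (drop j xs))"
  have "lwalk E ?ws" using assms by (intro lwalk_rev lwalk_take lwalk_drop)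
  moreover have "?ws \<noteq> []" using assms by simp
  moreover have "hd ?ws = xs!i" using assms False by (simp add: hd_rev last_conv_nth)
  moreover have "last ?ws = xs!j" using assms by (simp add: last_rev hd_conv_nth)
  moreover have "set ?ws \<subseteq> set xs" by (simp add: set_drop_subset set_take_subset_set_take subsetI)
       (meson in_set_dropD in_set_takeD subsetI)
  ultimately show ?thesis by blast
qed

lemma lwalk_splice:
  assumes "lwalk E xs" "k \<le> j" "j < length xs" "0 < k"
    "xs!(k-1) = xs!j \<or> adj E (xs!(k-1)) (xs!j)"
  shows "lwalk E (take k xs @ drop j xs)"
proof (rule lwalk_append)
  show "lwalk E (take k xs)" "lwalk E (drop j xs)" using assms(1) by (auto intro: lwalk_take lwalk_drop)
  show "take k xs \<noteq> []" "drop j xs \<noteq> []" using assms by auto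
  have "last (take k xs) = xs!(k-1)" using assms by (subst last_conv_nth) auto
  moreover have "hd (drop j xs) = xs!j" using assms by (simp add: hd_drop_conv_nth)
  ultimately show "last (take k xs) = hd (drop j xs) \<or> adj E (last (take k xs)) (hd (drop j xs))"
    using assms(5) by simp
qed

lemma shortest:
  assumes lf: "loopfree E"
  shows "lwalk E xs \<Longrightarrow> xs \<noteq> [] \<Longrightarrow>
    \<exists>ys. ipath E ys \<and> ys \<noteq> [] \<and> hd ys = hd xs \<and> last ys = last xs \<and> set ys \<subseteq> set xs"
proof (induction "length xs" arbitrary: xs rule: less_induct)
  case less
  show ?case
  proof (cases "\<exists>i j. i < j \<and> j < length xs \<and> xs!i = xs!j")
    case True
    then obtain i j where ij: "i < j" "j < length xs" "xs!i = xs!j" by blast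
    show ?thesis
    proof (cases "i = 0")
      case True
      let ?ys = "drop j xs"
      have "lwalk E ?ys" "?ys \<noteq> []" "length ?ys < length xs" using less.prems ij True
        by (auto intro: lwalk_drop)
      from less.hyps[OF this(3) this(1,2)] obtain zs where
        "ipath E zs \<and> zs \<noteq> [] \<and> hd zs = hd ?ys \<and> last zs = last ?ys \<and> set zs \<subseteq> set ?ys" by blast
      moreover have "hd ?ys = hd xs" using ij True less.prems by (simp add: hd_drop_conv_nth hd_conv_nth)
      moreover have "last ?ys = last xs" using ij by simp
      moreover have "set ?ys \<subseteq> set xs" by (simp add: set_drop_subset)
      ultimately show ?thesis by (metis subset_trans)
    next
      case False
      let ?ys = "take i xs @ drop j xs"
      have "Suc (i - 1) < length xs" using ij by auto
      hence "xs!(i-1) = xs!Suc (i-1) \<or> adj E (xs!(i-1)) (xs!Suc (i-1))"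
        using less.prems(1) unfolding lwalk_def by blast
      hence "xs!(i-1) = xs!j \<or> adj E (xs!(i-1)) (xs!j)" using False ij by simp
      hence "lwalk E ?ys" using less.prems ij False
        by (intro lwalk_splice) auto
      moreover have "?ys \<noteq> []" "length ?ys < length xs" using ij False by auto
      moreover note less.hyps[OF this(2) \<open>lwalk E ?ys\<close> this(1)]
      then obtain zs where
        "ipath E zs \<and> zs \<noteq> [] \<and> hd zs = hd ?ys \<and> last zs = last ?ys \<and> set zs \<subseteq> set ?ys"
        using \<open>lwalk E ?ys\<close> \<open>?ys \<noteq> []\<close> by blast
      moreover have "hd ?ys = hd xs" using ij False less.prems by (simp add: hd_conv_nth nth_append)
      moreover have "last ?ys = last xs" using ij by simp
      moreover have "set ?ys \<subseteq> set xs" by (auto dest: in_set_takeD in_set_dropD)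
      ultimately show ?thesis by (metis subset_trans)
    qed
  next
    case nodup: False
    show ?thesis
    proof (cases "\<exists>i j. Suc i < j \<and> j < length xs \<and> adj E (xs!i) (xs!j)")
      case True
      then obtain i j where ij: "Suc i < j" "j < length xs" "adj E (xs!i) (xs!j)" by blast
      let ?ys = "take (Suc i) xs @ drop j xs"
      have "lwalk E ?ys" using less.prems ij
        by (intro lwalk_splice) auto
      moreover have "?ys \<noteq> []" "length ?ys < length xs" using ij by auto
      moreover note less.hyps[OF this(2) \<open>lwalk E ?ys\<close> this(1)]
      then obtain zs where
        "ipath E zs \<and> zs \<noteq> [] \<and> hd zs = hd ?ys \<and> last zs = last ?ys \<and> set zs \<subseteq> set ?ys"
        using \<open>lwalk E ?ys\<close> \<open>?ys \<noteq> []\<close> by blast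
      moreover have "hd ?ys = hd xs" using ij less.prems by (simp add: hd_conv_nth nth_append)
      moreover have "last ?ys = last xs" using ij by simp
      moreover have "set ?ys \<subseteq> set xs" by (auto dest: in_set_takeD in_set_dropD)
      ultimately show ?thesis by (metis subset_trans)
    next
      case False
      have dist: "distinct xs" using nodup
        by (metis distinct_conv_nth linorder_neqE_nat)
      have "ipath E xs" unfolding ipath_def
      proof (intro conjI allI impI dist)
        fix i j assume i: "i < length xs" and j: "j < length xs"
        show "adj E (xs!i) (xs!j) = (j = Suc i \<or> i = Suc j)"
        proof
          assume a: "adj E (xs!i) (xs!j)"
          have "i \<noteq> j" using a lf loopfree_adj by metis
          moreover have "\<not> Suc i < j" using False a j by blast
          moreover have "\<not> Suc j < i" using False a i adj_sym by metis
          ultimately show "j = Suc i \<or> i = Suc j" by linarith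
        next
          assume "j = Suc i \<or> i = Suc j"
          thus "adj E (xs!i) (xs!j)"
          proof
            assume "j = Suc i"
            thus ?thesis using less.prems(1) j dist i unfolding lwalk_def
              by (metis Suc_n_not_le_n distinct_conv_nth nat_le_linear)
          next
            assume "i = Suc j"
            thus ?thesis using less.prems(1) i dist j adj_sym unfolding lwalk_def
              by (metis Suc_n_not_le_n distinct_conv_nth nat_le_linear)
          qed
        qed
      qed
      thus ?thesis using less.prems by blast
    qed
  qed
qed



definition hdec :: "'a set set \<Rightarrow> 'a \<Rightarrow> 'a list \<Rightarrow> bool" where
  "hdec E u q \<longleftrightarrow> ipath E q \<and> length q \<ge> 3 \<and> u \<notin> set q \<and>
     (\<forall>x\<in>set q. adj E u x \<longleftrightarrow> x = hd q \<or> x = last q)"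

lemma mod_small2: "k < (n::nat) \<Longrightarrow> x \<le> n \<Longrightarrow> (k + x) mod n = (if k + x < n then k + x else k + x - n)"
proof -
  assume a: "k < n" "x \<le> n"
  show ?thesis
  proof (cases "k + x < n")
    case True thus ?thesis by simp
  next
    case False
    hence "(k + x) mod n = (k + x - n) mod n" by (simp add: le_mod_geq)
    also have "\<dots> = k + x - n" using a by simp
    finally show ?thesis using False by simp
  qed
qed

lemma ipath_nth_adj: "ipath E q \<Longrightarrow> Suc i < length q \<Longrightarrow> adj E (q!i) (q!Suc i)"
  unfolding ipath_def by auto

lemma mk_hole:
  assumes lf: "loopfree E" and h: "hdec E u q" and uV: "u \<in> V" and qV: "set q \<subseteq> V"
  shows "is_hole V E (insert u (set q))"
  unfolding is_hole_def
proof (intro exI[of _ "u # q"] conjI allI impI)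
  have ip: "ipath E q" and l3: "length q \<ge> 3" and un: "u \<notin> set q"
    and ua: "\<And>x. x \<in> set q \<Longrightarrow> adj E u x \<longleftrightarrow> x = hd q \<or> x = last q"
    using h by (auto simp: hdec_def)
  have dq: "distinct q" using ip by (simp add: ipath_def)
  show "distinct (u # q)" using un dq by simp
  show "4 \<le> length (u # q)" using l3 by simp
  show "set (u # q) = insert u (set q)" by simp
  show "insert u (set q) \<subseteq> V" using uV qV by simp
  fix i j assume i: "i < length (u # q)" and j: "j < length (u # q)"
  let ?n = "length (u # q)"
  have qne: "q \<noteq> []" using l3 by auto
  have hdq: "hd q = q ! 0" and lq: "last q = q ! (length q - 1)" using qne
    by (auto simp: hd_conv_nth last_conv_nth)
  have uadj: "adj E u (q!m) \<longleftrightarrow> m = 0 \<or> m = length q - 1" if "m < length q" for m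
  proof -
    have "adj E u (q!m) \<longleftrightarrow> q!m = q!0 \<or> q!m = q!(length q - 1)" using ua[of "q!m"] that hdq lq by simp
    moreover have "q!m = q!0 \<longleftrightarrow> m = 0" using nth_eq_iff_index_eq[OF dq that, of 0] qne by simp
    moreover have "q!m = q!(length q - 1) \<longleftrightarrow> m = length q - 1"
      using nth_eq_iff_index_eq[OF dq that, of "length q - 1"] l3 by simp
    ultimately show ?thesis by simp
  qed
  have "{(u # q) ! i, (u # q) ! j} \<in> E \<longleftrightarrow> adj E ((u # q) ! i) ((u # q) ! j)" by (simp add: adj_def)
  also have "\<dots> \<longleftrightarrow> (j = Suc i mod ?n \<or> i = Suc j mod ?n)"
  proof (cases "i = 0"; cases "j = 0")
    assume "i = 0" "j = 0" thus ?thesis using loopfree_adj[OF lf, of u] qne by (simp add: mod_Suc)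
  next
    assume a: "i = 0" "j \<noteq> 0"
    have "adj E ((u # q) ! i) ((u # q) ! j) = adj E u (q!(j-1))" using a by (simp add: nth_Cons')
    also have "\<dots> = (j - 1 = 0 \<or> j - 1 = length q - 1)" using uadj j a by simp
    also have "\<dots> = (j = Suc i mod ?n \<or> i = Suc j mod ?n)" using a j l3 by (auto simp: mod_Suc)
    finally show ?thesis .
  next
    assume a: "i \<noteq> 0" "j = 0"
    have "adj E ((u # q) ! i) ((u # q) ! j) = adj E u (q!(i-1))" using a by (simp add: nth_Cons' adj_sym)
    also have "\<dots> = (i - 1 = 0 \<or> i - 1 = length q - 1)" using uadj i a by simp
    also have "\<dots> = (j = Suc i mod ?n \<or> i = Suc j mod ?n)" using a i l3 by (auto simp: mod_Suc)
    finally show ?thesis .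
  next
    assume a: "i \<noteq> 0" "j \<noteq> 0"
    have "adj E ((u # q) ! i) ((u # q) ! j) = adj E (q!(i-1)) (q!(j-1))" using a by (simp add: nth_Cons')
    also have "\<dots> = (j - 1 = Suc (i - 1) \<or> i - 1 = Suc (j - 1))" using ip i j a unfolding ipath_def by auto
    also have "\<dots> = (j = Suc i mod ?n \<or> i = Suc j mod ?n)" using a i j l3 by (auto simp: mod_Suc)
    finally show ?thesis .
  qed
  finally show "{(u # q) ! i, (u # q) ! j} \<in> E \<longleftrightarrow> (j = Suc i mod ?n \<or> i = Suc j mod ?n)" .
qed

lemma mod_Suc_small: "a < (n::nat) \<Longrightarrow> Suc a mod n = (if Suc a < n then Suc a else 0)"
  by (auto simp: mod_Suc)

lemma modcancel:
  assumes "k < (n::nat)" "x \<le> n" "y \<le> n"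
  shows "((k + x) mod n = (k + y) mod n) \<longleftrightarrow> (x = y \<or> (x = 0 \<and> y = n) \<or> (x = n \<and> y = 0))"
proof -
  have "(k + x) mod n = (if k + x < n then k + x else k + x - n)" using mod_small2 assms by blast
  moreover have "(k + y) mod n = (if k + y < n then k + y else k + y - n)" using mod_small2 assms by blast
  ultimately show ?thesis using assms by auto
qed

lemma hole_dec:
  assumes hole: "is_hole V E H" and uH: "u \<in> H"
  shows "\<exists>q. hdec E u q \<and> set q = H - {u}"
proof -
  obtain xs where d: "distinct xs" and l4: "length xs \<ge> 4" and sx: "set xs = H"
    and HI: "\<And>a b. a < length xs \<Longrightarrow> b < length xs \<Longrightarrow>
        adj E (xs!a) (xs!b) \<longleftrightarrow> (b = Suc a mod length xs \<or> a = Suc b mod length xs)"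
    using hole unfolding is_hole_def adj_def by blast
  let ?n = "length xs"
  have n0: "0 < ?n" using l4 by auto
  obtain k where k: "k < ?n" "xs!k = u" using uH sx by (metis in_set_conv_nth)
  define q where "q = tl (rotate k xs)"
  have lq: "length q = ?n - 1" by (simp add: q_def)
  have qn: "q!i = xs!((k + Suc i) mod ?n)" if "i < ?n - 1" for i
    using that by (simp add: q_def nth_tl nth_rotate)
  have dr: "distinct (rotate k xs)" using d by simp
  have dq: "distinct q" using dr by (simp add: q_def distinct_tl)
  have "xs \<noteq> []" using l4 by auto
  hence hdr: "hd (rotate k xs) = u" using k hd_rotate_conv_nth[of xs k] by simp
  have sq: "set q = H - {u}"
  proof -
    have "rotate k xs \<noteq> []" using l4 by auto
    hence "rotate k xs = hd (rotate k xs) # q" by (simp add: q_def)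
    hence "set (rotate k xs) = insert u (set q)" "u \<notin> set q" using dr hdr
      by (metis list.simps(15), metis distinct.simps(2))
    thus ?thesis using sx by auto
  qed
  have un: "u \<notin> set q" using sq by simp
  have ai: "(k + Suc i) mod ?n = (if k + Suc i < ?n then k + Suc i else k + Suc i - ?n)"
    if "i < ?n - 1" for i using mod_small2[OF k(1), of "Suc i"] that by simp
  have ip: "ipath E q" unfolding ipath_def
  proof (intro conjI dq allI impI)
    fix i j assume i: "i < length q" and j: "j < length q"
    let ?a = "(k + Suc i) mod ?n" and ?b = "(k + Suc j) mod ?n"
    have "adj E (q!i) (q!j) = adj E (xs!?a) (xs!?b)" using i j lq qn by simp
    also have "\<dots> = (?b = Suc ?a mod ?n \<or> ?a = Suc ?b mod ?n)" using l4 by (intro HI) (auto intro: mod_less_divisor)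
    also have "\<dots> = (j = Suc i \<or> i = Suc j)"
    proof -
      have "Suc ?a mod ?n = (k + Suc (Suc i)) mod ?n" by (simp add: mod_Suc_eq)
      moreover have "Suc ?b mod ?n = (k + Suc (Suc j)) mod ?n" by (simp add: mod_Suc_eq)
      moreover have "(?b = (k + Suc (Suc i)) mod ?n) = (j = Suc i)"
        using modcancel[OF k(1), of "Suc j" "Suc (Suc i)"] i j lq by auto
      moreover have "(?a = (k + Suc (Suc j)) mod ?n) = (i = Suc j)"
        using modcancel[OF k(1), of "Suc i" "Suc (Suc j)"] i j lq by auto
      ultimately show ?thesis by simp
    qed
    finally show "adj E (q!i) (q!j) = (j = Suc i \<or> i = Suc j)" .
  qed
  have ua: "adj E u x \<longleftrightarrow> x = hd q \<or> x = last q" if x: "x \<in> set q" for x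
  proof -
    obtain i where i: "i < length q" "x = q!i" using x by (metis in_set_conv_nth)
    let ?b = "(k + Suc i) mod ?n"
    have "adj E u x = adj E (xs!k) (xs!?b)" using i k lq qn by simp
    also have "\<dots> = (?b = Suc k mod ?n \<or> k = Suc ?b mod ?n)" using l4 k by (intro HI) (auto intro: mod_less_divisor)
    also have "\<dots> = (i = 0 \<or> i = length q - 1)"
    proof -
      have "Suc k mod ?n = (k + 1) mod ?n" by simp
      moreover have "Suc ?b mod ?n = (k + Suc (Suc i)) mod ?n" by (simp add: mod_Suc_eq)
      moreover have "k = (k + 0) mod ?n" using k by simp
      moreover have "(?b = (k + 1) mod ?n) = (i = 0)"
        using modcancel[OF k(1), of "Suc i" 1] i lq by auto
      moreover have "((k + 0) mod ?n = (k + Suc (Suc i)) mod ?n) = (i = length q - 1)"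
        using modcancel[OF k(1), of 0 "Suc (Suc i)"] i lq by auto
      ultimately show ?thesis by metis
    qed
    also have "\<dots> = (x = hd q \<or> x = last q)"
    proof -
      have qne: "q \<noteq> []" using lq l4 by auto
      have "x = hd q \<longleftrightarrow> i = 0" using i nth_eq_iff_index_eq[OF dq i(1), of 0] qne
        by (simp add: hd_conv_nth)
      moreover have "x = last q \<longleftrightarrow> i = length q - 1" using i nth_eq_iff_index_eq[OF dq i(1), of "length q - 1"] qne
        by (simp add: last_conv_nth)
      ultimately show ?thesis by simp
    qed
    finally show ?thesis .
  qed
  have "hdec E u q" unfolding hdec_def using ip lq l4 un ua by auto
  thus ?thesis using sq by blast
qed



lemma adj_V: "simple_graph V E \<Longrightarrow> adj E x y \<Longrightarrow> x \<in> V \<and> y \<in> V"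
  unfolding simple_graph_def adj_def by (metis doubleton_eq_iff)

lemma sg_loopfree: "simple_graph V E \<Longrightarrow> loopfree E"
  unfolding simple_graph_def loopfree_def by (metis doubleton_eq_iff insert_absorb2)

lemma ipath_V:
  assumes "simple_graph V E" "ipath E ys" "length ys \<ge> 2"
  shows "set ys \<subseteq> V"
proof
  fix x assume "x \<in> set ys"
  then obtain i where i: "i < length ys" "x = ys!i" by (metis in_set_conv_nth)
  show "x \<in> V"
  proof (cases "Suc i < length ys")
    case True
    hence "adj E (ys!i) (ys!Suc i)" using assms(2) by (simp add: ipath_def)
    thus ?thesis using adj_V[OF assms(1)] i by blast
  next
    case False
    hence "i = Suc (i - 1)" "i - 1 < length ys" using i assms(3) by auto
    hence "adj E (ys!(i-1)) (ys!i)" using assms(2) i by (simp add: ipath_def) 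
    thus ?thesis using adj_V[OF assms(1)] i by blast
  qed
qed

lemma hdec_rev: "hdec E u q \<Longrightarrow> hdec E u (rev q)"
  unfolding hdec_def by (auto simp: ipath_rev hd_rev last_rev)

lemma hdec_V: "simple_graph V E \<Longrightarrow> hdec E u q \<Longrightarrow> set q \<subseteq> V \<and> u \<in> V"
proof -
  assume sg: "simple_graph V E" and h: "hdec E u q"
  hence "set q \<subseteq> V" using ipath_V[OF sg] unfolding hdec_def by auto
  moreover have "adj E u (hd q)"
  proof -
    have "q \<noteq> []" using h unfolding hdec_def by auto
    thus ?thesis using h unfolding hdec_def by (auto simp: hd_in_set)
  qed
  ultimately show ?thesis using adj_V[OF sg] by blast
qed

lemma hdec_hole: "simple_graph V E \<Longrightarrow> hdec E u q \<Longrightarrow> is_hole V E (insert u (set q))"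
  using mk_hole sg_loopfree hdec_V by metis

lemma hdec_nth_adj: "hdec E u q \<Longrightarrow> Suc i < length q \<Longrightarrow> adj E (q!i) (q!Suc i)"
  unfolding hdec_def ipath_def by auto

lemma hdec_nonadj: "hdec E u q \<Longrightarrow> i < length q \<Longrightarrow> j < length q \<Longrightarrow> Suc i < j \<Longrightarrow> \<not> adj E (q!i) (q!j)"
  unfolding hdec_def ipath_def by auto

lemma hdec_uadj: "hdec E u q \<Longrightarrow> i < length q \<Longrightarrow> adj E u (q!i) \<longleftrightarrow> i = 0 \<or> i = length q - 1"
proof -
  assume h: "hdec E u q" and i: "i < length q"
  have dq: "distinct q" and l3: "length q \<ge> 3" using h by (auto simp: hdec_def ipath_def)
  have qne: "q \<noteq> []" using l3 by auto
  have "adj E u (q!i) \<longleftrightarrow> q!i = hd q \<or> q!i = last q" using h i unfolding hdec_def by auto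
  moreover have "q!i = hd q \<longleftrightarrow> i = 0" using nth_eq_iff_index_eq[OF dq i, of 0] qne
    by (simp add: hd_conv_nth)
  moreover have "q!i = last q \<longleftrightarrow> i = length q - 1" using nth_eq_iff_index_eq[OF dq i, of "length q - 1"] qne
    by (simp add: last_conv_nth)
  ultimately show ?thesis by simp
qed

lemma sep:
  assumes sg: "simple_graph V E" and nc: "NC_vertex V E u" and h: "hdec E u q"
    and s: "0 < s" "Suc s < length q"
    and ws: "lwalk E ws" "ws \<noteq> []" "hd ws = q!(s-1)" "last ws = q!(Suc s)"
    and al: "\<And>x. x \<in> set ws \<Longrightarrow> x \<noteq> u \<and> x \<noteq> q!s \<and> (adj E x (q!s) \<longrightarrow> x = q!(s-1) \<or> x = q!Suc s)"
  shows False
proof -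
  have lf: "loopfree E" using sg by (rule sg_loopfree)
  obtain ys where ys: "ipath E ys" "ys \<noteq> []" "hd ys = q!(s-1)" "last ys = q!Suc s" "set ys \<subseteq> set ws"
    using shortest[OF lf ws(1,2)] ws(3,4) by metis
  let ?z = "q!s"
  have dq: "distinct q" using h by (simp add: hdec_def ipath_def)
  have ne: "q!(s-1) \<noteq> q!Suc s" using dq s nth_eq_iff_index_eq by fastforce
  have na: "\<not> adj E (q!(s-1)) (q!Suc s)" using hdec_nonadj[OF h, of "s-1" "Suc s"] s by auto
  have a1: "adj E (q!(s-1)) ?z" using hdec_nth_adj[OF h, of "s-1"] s by auto
  have a2: "adj E ?z (q!Suc s)" using hdec_nth_adj[OF h, of s] s by auto
  have l3: "length ys \<ge> 3"
  proof (rule ccontr)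
    assume "\<not> length ys \<ge> 3"
    moreover have "length ys \<noteq> 0" using ys(2) by simp
    moreover have "length ys \<noteq> 1" using ys(2-4) ne by (metis One_nat_def hd_conv_nth last_conv_nth diff_self_eq_0)
    moreover have "length ys \<noteq> 2"
    proof
      assume l2: "length ys = 2"
      hence "adj E (ys!0) (ys!1)" using ys(1) by (simp add: ipath_def)
      moreover have "ys!0 = q!(s-1)" "ys!1 = q!Suc s" using ys(2-4) l2
        by (auto simp: hd_conv_nth last_conv_nth)
      ultimately show False using na by simp
    qed
    ultimately show False by linarith
  qed
  have zn: "?z \<notin> set ys" using al ys(5) by blast
  have hz: "hdec E ?z ys" unfolding hdec_def
  proof (intro conjI ys(1) l3 zn ballI)
    fix x assume x: "x \<in> set ys"
    show "adj E ?z x \<longleftrightarrow> x = hd ys \<or> x = last ys"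
    proof
      assume "adj E ?z x"
      hence "adj E x ?z" by (simp add: adj_sym)
      moreover have "x \<in> set ws" using x ys(5) by auto
      ultimately have "x = q!(s-1) \<or> x = q!Suc s" using al[of x] by blast
      thus "x = hd ys \<or> x = last ys" using ys(3,4) by simp
    next
      assume "x = hd ys \<or> x = last ys"
      thus "adj E ?z x" using ys(3,4) a1 a2 by (auto simp: adj_sym)
    qed
  qed
  have H'h: "is_hole V E (insert ?z (set ys))" by (rule hdec_hole[OF sg hz])
  have Hh: "is_hole V E (insert u (set q))" by (rule hdec_hole[OF sg h])
  have "u \<notin> set q" using h by (simp add: hdec_def)
  hence "u \<noteq> ?z" using s by auto
  hence uH': "u \<notin> insert ?z (set ys)" using al ys(5) by auto
  have zq: "?z \<in> set q" "q!(s-1) \<in> set q" "q!Suc s \<in> set q" using s by auto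
  have hy: "q!(s-1) \<in> set ys" "q!Suc s \<in> set ys" using ys(2-4) by (metis hd_in_set, metis last_in_set)
  have "share_consec_edges E (insert u (set q)) (insert ?z (set ys))"
    unfolding share_consec_edges_def hole_edges_def
    apply (rule exI[of _ "q!(s-1)"], rule exI[of _ ?z], rule exI[of _ "q!Suc s"])
    using ne a1 a2 zq hy by (auto simp: adj_def)
  moreover have "insert u (set q) \<in> holes_at V E u" using Hh by (simp add: holes_at_def holes_def)
  moreover have "insert ?z (set ys) \<in> holes V E - holes_at V E u" using H'h uH'
    by (simp add: holes_at_def holes_def)
  ultimately show False using nc unfolding NC_vertex_def by blast
qed



definition touch :: "'a set set \<Rightarrow> 'a list \<Rightarrow> 'a set \<Rightarrow> bool" where
  "touch E rs A \<longleftrightarrow> (\<exists>x\<in>set rs. \<exists>z\<in>A. x = z \<or> adj E x z)"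

lemma first_adj_path:
  assumes lf: "loopfree E" and rs: "lwalk E rs" "rs \<noteq> []" "adj E y (hd rs)" "P (last rs)" "\<not> P y"
  shows "\<exists>ys. ipath E ys \<and> length ys \<ge> 2 \<and> hd ys = y \<and> P (last ys) \<and> set ys \<subseteq> insert y (set rs)
     \<and> (\<forall>x\<in>set ys. P x \<longrightarrow> x = last ys)"
proof -
  have ex: "\<exists>k. k < length rs \<and> P (rs!k)" using rs(2,4) by (metis last_conv_nth diff_less length_greater_0_conv zero_less_one)
  define k where "k = (LEAST k. k < length rs \<and> P (rs!k))"
  have k: "k < length rs" "P (rs!k)" using LeastI_ex[OF ex] unfolding k_def by auto
  have kmin: "\<not> P (rs!j)" if "j < k" for j using not_less_Least[of j "\<lambda>k. k < length rs \<and> P (rs!k)"] that k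
    unfolding k_def by auto
  let ?ws = "y # take (Suc k) rs"
  have "lwalk E ?ws"
  proof -
    have "lwalk E ([y] @ take (Suc k) rs)"
      using rs by (intro lwalk_append lwalk_take lwalk_single) (auto simp: hd_take)
    thus ?thesis by simp
  qed
  moreover have "last ?ws = rs!k" using k by (simp add: take_Suc_conv_app_nth)
  ultimately obtain ys where ys: "ipath E ys" "ys \<noteq> []" "hd ys = y" "last ys = rs!k" "set ys \<subseteq> set ?ws"
    using shortest[OF lf, of ?ws] by (metis list.distinct(1) list.sel(1))
  have st: "set (take (Suc k) rs) = insert (rs!k) (set (take k rs))" using k
    by (simp add: take_Suc_conv_app_nth)
  have npk: "\<not> P x" if "x \<in> set (take k rs)" for x
    using that kmin by (metis in_set_conv_nth length_take min_less_iff_conj nth_take)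
  have "length ys \<ge> 2"
  proof (rule ccontr)
    assume "\<not> length ys \<ge> 2"
    moreover have "length ys \<noteq> 0" using ys(2) by simp
    ultimately have "length ys = 1" by linarith
    hence "hd ys = last ys" by (cases ys) (auto simp: length_0_conv)
    thus False using ys(3,4) k rs(5) \<open>\<not> P y\<close> by (metis assms(6))
  qed
  moreover have "\<forall>x\<in>set ys. P x \<longrightarrow> x = last ys"
  proof (intro ballI impI)
    fix x assume x: "x \<in> set ys" "P x"
    hence "x \<in> insert y (insert (rs!k) (set (take k rs)))" using ys(5) st by auto
    thus "x = last ys" using x(2) npk assms(6) ys(4) by auto
  qed
  moreover have "set ys \<subseteq> insert y (set rs)" using ys(5) by (auto dest: in_set_takeD)
  ultimately show ?thesis using ys k by auto
qed

lemma in_set_drop_nth: "x \<in> set (drop r q) \<Longrightarrow> \<exists>j. r \<le> j \<and> j < length q \<and> x = q!j"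
proof -
  assume "x \<in> set (drop r q)"
  then obtain i where i: "i < length (drop r q)" "x = drop r q ! i" by (auto simp: in_set_conv_nth)
  thus ?thesis by (intro exI[of _ "r + i"]) auto
qed

lemma coreR:
  assumes sg: "simple_graph V E" and h: "hdec E u q" and s: "0 < s" "Suc s < length q"
    and y: "adj E y (q!s)" "y \<notin> set q" "y \<noteq> u" "\<not> adj E u y"
    and rs: "lwalk E rs" "rs \<noteq> []" "adj E y (hd rs)" "adj E u (last rs)"
    and av: "\<And>x. x \<in> set rs \<Longrightarrow> x \<noteq> u \<and> x \<noteq> q!s \<and> \<not> adj E x (q!s)"
    and nt: "\<not> touch E rs (set (drop (Suc s) q))"
  shows "\<exists>H. is_hole V E H \<and> u \<in> H \<and> y \<in> H"
proof -
  have lf: "loopfree E" using sg by (rule sg_loopfree)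
  have ipq: "ipath E q" and dq: "distinct q" and un: "u \<notin> set q" using h by (auto simp: hdec_def ipath_def)
  obtain ys where ys: "ipath E ys" "length ys \<ge> 2" "hd ys = y" "adj E u (last ys)"
    "set ys \<subseteq> insert y (set rs)" "\<And>x. x \<in> set ys \<Longrightarrow> adj E u x \<Longrightarrow> x = last ys"
    using first_adj_path[OF lf rs(1,2,3), of "adj E u"] rs(4) y(4) by blast
  have ysne: "ys \<noteq> []" using ys(2) by auto
  define r where "r = (GREATEST j. j < length q \<and> s \<le> j \<and> adj E y (q!j))"
  have rP: "r < length q \<and> s \<le> r \<and> adj E y (q!r)"
    unfolding r_def by (rule GreatestI_nat[of _ s "length q"]) (use y(1) s in auto)
  have rmax: "j \<le> r" if "j < length q" "s \<le> j" "adj E y (q!j)" for j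
    unfolding r_def by (rule Greatest_le_nat[of _ j "length q"]) (use that in auto)
  define D where "D = drop r q"
  have Dset: "\<exists>j. r \<le> j \<and> j < length q \<and> x = q!j" if "x \<in> set D" for x
    using in_set_drop_nth that unfolding D_def by metis
  have Dne: "D \<noteq> []" using rP by (simp add: D_def)
  have hdD: "hd D = q!r" using rP by (simp add: D_def hd_drop_conv_nth)
  have lastD: "last D = last q" using rP by (simp add: D_def)
  have notrs: False if "x \<in> set rs" "r \<le> j" "j < length q" "x = q!j \<or> adj E x (q!j)" for x j
  proof (cases "j = s")
    case True thus False using av[OF that(1)] that(4) by blast
  next
    case False
    hence sj: "Suc s \<le> j" using that rP by auto
    hence "drop (Suc s) q ! (j - Suc s) = q!j" "j - Suc s < length (drop (Suc s) q)" using that by auto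
    hence "q!j \<in> set (drop (Suc s) q)" by (metis nth_mem)
    thus False using nt that(1,4) unfolding touch_def by blast
  qed
  define P where "P = rev D @ ys"
  have disj: "set D \<inter> set ys = {}"
  proof (rule ccontr)
    assume "set D \<inter> set ys \<noteq> {}"
    then obtain z where z: "z \<in> set D" "z \<in> set ys" by blast
    obtain j where j: "r \<le> j" "j < length q" "z = q!j" using Dset[OF z(1)] by blast
    have "z = y \<or> z \<in> set rs" using z(2) ys(5) by auto
    thus False
    proof
      assume "z = y" thus False using y(2) j by auto
    next
      assume "z \<in> set rs" thus False using notrs[of z j] j by auto
    qed
  qed
  have ipP: "ipath E P" unfolding P_def
  proof (rule ipath_append)
    show "ipath E (rev D)" unfolding D_def by (intro ipath_rev ipath_drop ipq)
    show "ipath E ys" by (rule ys(1))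
    show "set (rev D) \<inter> set ys = {}" using disj by simp
    show "rev D \<noteq> []" "ys \<noteq> []" using Dne ysne by auto
    show "adj E (last (rev D)) (hd ys)" using hdD rP ys(3) Dne by (simp add: last_rev adj_sym)
    fix x z assume x: "x \<in> set (rev D)" and z: "z \<in> set ys" and a: "adj E x z"
    obtain j where j: "r \<le> j" "j < length q" "x = q!j" using Dset x by auto
    have "z = y \<or> z \<in> set rs" using z ys(5) by auto
    moreover have "z \<notin> set rs" using notrs[of z j] j a by (auto simp: adj_sym)
    ultimately have zy: "z = y" by blast
    hence "adj E y (q!j)" using j a by (simp add: adj_sym)
    hence "j \<le> r" using rmax[of j] j rP by linarith
    hence "j = r" using j by simp
    thus "x = last (rev D) \<and> z = hd ys" using zy ys(3) j hdD Dne by (simp add: last_rev)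
  qed
  have lq3: "length q \<ge> 3" using h by (simp add: hdec_def)
  have hP: "hdec E u P" unfolding hdec_def
  proof (intro conjI ipP ballI)
    have "length D \<ge> 1" using Dne by (cases D) auto
    thus "3 \<le> length P" using ys(2) by (simp add: P_def)
    have "u \<notin> set ys" using ys(5) y(3) av by auto
    moreover have "u \<notin> set D" using un by (auto simp: D_def dest: in_set_dropD)
    ultimately show "u \<notin> set P" by (simp add: P_def)
    fix x assume x: "x \<in> set P"
    have hdP: "hd P = last q" using Dne lastD by (simp add: P_def hd_append hd_rev)
    have lastP: "last P = last ys" using ysne by (simp add: P_def)
    have lqD: "last q \<in> set D" using lastD Dne by (metis last_in_set)
    have lyy: "last ys \<in> set ys" using ysne by simp
    show "adj E u x \<longleftrightarrow> x = hd P \<or> x = last P"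
    proof (cases "x \<in> set D")
      case True
      obtain j where j: "r \<le> j" "j < length q" "x = q!j" using Dset True by blast
      have "adj E u x \<longleftrightarrow> j = 0 \<or> j = length q - 1" using hdec_uadj[OF h j(2)] j by simp
      also have "\<dots> \<longleftrightarrow> j = length q - 1" using j rP s by auto
      also have "\<dots> \<longleftrightarrow> x = last q"
      proof -
        have "q \<noteq> []" using lq3 by auto
        hence "last q = q!(length q - 1)" by (simp add: last_conv_nth)
        moreover have "length q - 1 < length q" using lq3 by simp
        ultimately show ?thesis using j nth_eq_iff_index_eq[OF dq j(2), of "length q - 1"] by simp
      qed
      also have "\<dots> \<longleftrightarrow> x = hd P \<or> x = last P" using hdP lastP True disj lyy by auto
      finally show ?thesis .
    next
      case False
      hence xy: "x \<in> set ys" using x by (simp add: P_def)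
      have "adj E u x \<longleftrightarrow> x = last ys" using ys(4,6) xy by auto
      also have "\<dots> \<longleftrightarrow> x = hd P \<or> x = last P" using hdP lastP False lqD by auto
      finally show ?thesis .
    qed
  qed
  have "is_hole V E (insert u (set P))" by (rule hdec_hole[OF sg hP])
  moreover have "y \<in> set ys" using ys(3) ysne hd_in_set by metis
  hence "y \<in> set P" by (simp add: P_def)
  ultimately show ?thesis by blast
qed

lemma q_allowed:
  assumes h: "hdec E u q" and i: "i < length q" and s: "s < length q" "i \<noteq> s"
  shows "q!i \<noteq> u \<and> q!i \<noteq> q!s \<and> (adj E (q!i) (q!s) \<longrightarrow> q!i = q!(s-1) \<or> q!i = q!Suc s)"
proof -
  have ip: "ipath E q" and un: "u \<notin> set q" using h by (auto simp: hdec_def)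
  have dq: "distinct q" using ip by (simp add: ipath_def)
  have "q!i \<noteq> u" using un i by auto
  moreover have "q!i \<noteq> q!s" using nth_eq_iff_index_eq[OF dq i s(1)] s by simp
  moreover have "adj E (q!i) (q!s) \<longrightarrow> q!i = q!(s-1) \<or> q!i = q!Suc s"
    using ip i s unfolding ipath_def by auto
  ultimately show ?thesis by blast
qed

lemma in_set_take_nth: "x \<in> set (take s q) \<Longrightarrow> \<exists>i. i < s \<and> i < length q \<and> x = q!i"
proof -
  assume "x \<in> set (take s q)"
  then obtain i where i: "i < length (take s q)" "x = take s q ! i" by (auto simp: in_set_conv_nth)
  thus ?thesis by (intro exI[of _ i]) auto
qed

lemma sep_touch:
  assumes sg: "simple_graph V E" and nc: "NC_vertex V E u" and h: "hdec E u q"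
    and s: "0 < s" "Suc s < length q"
    and rs: "lwalk E rs" "rs \<noteq> []"
    and av: "\<And>x. x \<in> set rs \<Longrightarrow> x \<noteq> u \<and> x \<noteq> q!s \<and> \<not> adj E x (q!s)"
    and tL: "touch E rs (set (take s q))" and tR: "touch E rs (set (drop (Suc s) q))"
  shows False
proof -
    let ?T = "take s q" and ?R = "drop (Suc s) q"
    obtain x1 z1 where xz1: "x1 \<in> set rs" "z1 \<in> set ?T" "x1 = z1 \<or> adj E x1 z1"
      using tL unfolding touch_def by blast
    obtain x2 z2 where xz2: "x2 \<in> set rs" "z2 \<in> set ?R" "x2 = z2 \<or> adj E x2 z2"
      using tR unfolding touch_def by blast
    have lT: "length ?T = s" using s by simp
    obtain i1 where i1: "i1 < length ?T" "z1 = ?T!i1" using xz1(2) by (auto simp: in_set_conv_nth)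
    obtain i2 where i2: "i2 < length ?R" "z2 = ?R!i2" using xz2(2) by (auto simp: in_set_conv_nth)
    obtain k1 where k1: "k1 < length rs" "x1 = rs!k1" using xz1(1) by (auto simp: in_set_conv_nth)
    obtain k2 where k2: "k2 < length rs" "x2 = rs!k2" using xz2(1) by (auto simp: in_set_conv_nth)
    have ipq: "ipath E q" using h by (simp add: hdec_def)
    obtain w1 where w1: "lwalk E w1" "w1 \<noteq> []" "hd w1 = ?T!(s-1)" "last w1 = ?T!i1" "set w1 \<subseteq> set ?T"
      using lwalk_between[of E ?T "s-1" i1] i1 lT s ipq by (auto intro: lwalk_take ipath_lwalk)
    obtain w2 where w2: "lwalk E w2" "w2 \<noteq> []" "hd w2 = rs!k1" "last w2 = rs!k2" "set w2 \<subseteq> set rs"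
      using lwalk_between[OF rs(1) k1(1) k2(1)] by blast
    have lR: "0 < length ?R" using s by simp
    obtain w3 where w3: "lwalk E w3" "w3 \<noteq> []" "hd w3 = ?R!i2" "last w3 = ?R!0" "set w3 \<subseteq> set ?R"
      using lwalk_between[of E ?R i2 0] i2 lR ipq by (auto intro: lwalk_drop ipath_lwalk)
    let ?W = "w1 @ w2 @ w3"
    have W: "lwalk E ?W"
    proof (rule lwalk_append[OF w1(1) _ w1(2)])
      show "lwalk E (w2 @ w3)"
        using w2 w3 xz2(3) k2 i2 by (intro lwalk_append) auto
      show "w2 @ w3 \<noteq> []" using w2 by simp
      show "last w1 = hd (w2 @ w3) \<or> adj E (last w1) (hd (w2 @ w3))"
        using w1(4) w2(2,3) xz1(3) k1 i1 by (auto simp: adj_sym)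
    qed
    have hdW: "hd ?W = q!(s-1)" using w1 s by simp
    have lastW: "last ?W = q!Suc s" using w3 s by simp
    have al: "x \<noteq> u \<and> x \<noteq> q!s \<and> (adj E x (q!s) \<longrightarrow> x = q!(s-1) \<or> x = q!Suc s)"
      if x: "x \<in> set ?W" for x
    proof -
      have "x \<in> set ?T \<or> x \<in> set rs \<or> x \<in> set ?R" using x w1(5) w2(5) w3(5) by auto
      thus ?thesis
      proof (elim disjE)
        assume "x \<in> set ?T"
        then obtain i where "i < s" "i < length q" "x = q!i" using in_set_take_nth by metis
        thus ?thesis using q_allowed[OF h, of i s] s by auto
      next
        assume "x \<in> set rs" thus ?thesis using av by blast
      next
        assume "x \<in> set ?R"
        then obtain i where "Suc s \<le> i" "i < length q" "x = q!i" using in_set_drop_nth by metis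
        thus ?thesis using q_allowed[OF h, of i s] s by auto
      qed
    qed
    have "?W \<noteq> []" using w1 by simp
    from sep[OF sg nc h s W this hdW lastW al] show False .
qed

lemma coreX:
  assumes sg: "simple_graph V E" and nc: "NC_vertex V E u" and h: "hdec E u q"
    and s: "0 < s" "Suc s < length q"
    and y: "adj E y (q!s)" "y \<notin> set q" "y \<noteq> u" "\<not> adj E u y"
    and rs: "lwalk E rs" "rs \<noteq> []" "adj E y (hd rs)" "adj E u (last rs)"
    and av: "\<And>x. x \<in> set rs \<Longrightarrow> x \<noteq> u \<and> x \<noteq> q!s \<and> \<not> adj E x (q!s)"
  shows "\<exists>H. is_hole V E H \<and> u \<in> H \<and> y \<in> H"
proof (cases "touch E rs (set (drop (Suc s) q))")
  case False thus ?thesis using coreR[OF sg h s y rs av] by blast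
next
  case tR: True
  show ?thesis
  proof (cases "touch E rs (set (take s q))")
    case False
    let ?q = "rev q" and ?s = "length q - 1 - s"
    have h': "hdec E u ?q" using h by (rule hdec_rev)
    have s': "0 < ?s" "Suc ?s < length ?q" using s by auto
    have qs: "?q ! ?s = q ! s" using s by (simp add: rev_nth)
    have dr: "drop (Suc ?s) ?q = rev (take s q)"
    proof -
      have "Suc ?s = length q - s" using s by auto
      thus ?thesis using s by (simp add: drop_rev)
    qed
    have nt: "\<not> touch E rs (set (drop (Suc ?s) ?q))" using False dr by simp
    show ?thesis using coreR[OF sg h' s', of y rs] qs y rs av nt by auto
  next
    case tL: True
    let ?T = "take s q" and ?R = "drop (Suc s) q"
    obtain x1 z1 where xz1: "x1 \<in> set rs" "z1 \<in> set ?T" "x1 = z1 \<or> adj E x1 z1"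
      using tL unfolding touch_def by blast
    obtain x2 z2 where xz2: "x2 \<in> set rs" "z2 \<in> set ?R" "x2 = z2 \<or> adj E x2 z2"
      using tR unfolding touch_def by blast
    have lT: "length ?T = s" using s by simp
    obtain i1 where i1: "i1 < length ?T" "z1 = ?T!i1" using xz1(2) by (auto simp: in_set_conv_nth)
    obtain i2 where i2: "i2 < length ?R" "z2 = ?R!i2" using xz2(2) by (auto simp: in_set_conv_nth)
    obtain k1 where k1: "k1 < length rs" "x1 = rs!k1" using xz1(1) by (auto simp: in_set_conv_nth)
    obtain k2 where k2: "k2 < length rs" "x2 = rs!k2" using xz2(1) by (auto simp: in_set_conv_nth)
    have ipq: "ipath E q" using h by (simp add: hdec_def)
    obtain w1 where w1: "lwalk E w1" "w1 \<noteq> []" "hd w1 = ?T!(s-1)" "last w1 = ?T!i1" "set w1 \<subseteq> set ?T"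
      using lwalk_between[of E ?T "s-1" i1] i1 lT s ipq by (auto intro: lwalk_take ipath_lwalk)
    obtain w2 where w2: "lwalk E w2" "w2 \<noteq> []" "hd w2 = rs!k1" "last w2 = rs!k2" "set w2 \<subseteq> set rs"
      using lwalk_between[OF rs(1) k1(1) k2(1)] by blast
    have lR: "0 < length ?R" using s by simp
    obtain w3 where w3: "lwalk E w3" "w3 \<noteq> []" "hd w3 = ?R!i2" "last w3 = ?R!0" "set w3 \<subseteq> set ?R"
      using lwalk_between[of E ?R i2 0] i2 lR ipq by (auto intro: lwalk_drop ipath_lwalk)
    let ?W = "w1 @ w2 @ w3"
    have W: "lwalk E ?W"
    proof (rule lwalk_append[OF w1(1) _ w1(2)])
      show "lwalk E (w2 @ w3)"
        using w2 w3 xz2(3) k2 i2 by (intro lwalk_append) auto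
      show "w2 @ w3 \<noteq> []" using w2 by simp
      show "last w1 = hd (w2 @ w3) \<or> adj E (last w1) (hd (w2 @ w3))"
        using w1(4) w2(2,3) xz1(3) k1 i1 by (auto simp: adj_sym)
    qed
    have hdW: "hd ?W = q!(s-1)" using w1 s by simp
    have lastW: "last ?W = q!Suc s" using w3 s by simp
    have al: "x \<noteq> u \<and> x \<noteq> q!s \<and> (adj E x (q!s) \<longrightarrow> x = q!(s-1) \<or> x = q!Suc s)"
      if x: "x \<in> set ?W" for x
    proof -
      have "x \<in> set ?T \<or> x \<in> set rs \<or> x \<in> set ?R" using x w1(5) w2(5) w3(5) by auto
      thus ?thesis
      proof (elim disjE)
        assume "x \<in> set ?T"
        then obtain i where "i < s" "i < length q" "x = q!i" using in_set_take_nth by metis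
        thus ?thesis using q_allowed[OF h, of i s] s by auto
      next
        assume "x \<in> set rs" thus ?thesis using av by blast
      next
        assume "x \<in> set ?R"
        then obtain i where "Suc s \<le> i" "i < length q" "x = q!i" using in_set_drop_nth by metis
        thus ?thesis using q_allowed[OF h, of i s] s by auto
      qed
    qed
    have "?W \<noteq> []" using w1 by simp
    from sep[OF sg nc h s W this hdW lastW al] show ?thesis by blast
  qed
qed



definition Nb :: "'a set \<Rightarrow> 'a set set \<Rightarrow> 'a \<Rightarrow> 'a set" where
  "Nb V E u = {x. x \<noteq> u \<and> (\<exists>H\<in>holes_at V E u. x \<in> H)}"

lemma lc_adj: "adj (local_chordalize V E u) x y \<longleftrightarrow>
    adj E x y \<or> (x = u \<and> y \<in> Nb V E u) \<or> (y = u \<and> x \<in> Nb V E u)"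
  unfolding adj_def local_chordalize_def Nb_def
  by (auto simp: doubleton_eq_iff)

lemma lc_adj_nu: "x \<noteq> u \<Longrightarrow> y \<noteq> u \<Longrightarrow> adj (local_chordalize V E u) x y \<longleftrightarrow> adj E x y"
  using lc_adj by metis

lemma lc_sg: assumes sg: "simple_graph V E" shows "simple_graph V (local_chordalize V E u)"
  unfolding simple_graph_def
proof (intro conjI ballI)
  show "finite V" using sg by (simp add: simple_graph_def)
  fix e assume e: "e \<in> local_chordalize V E u"
  show "\<exists>x y. e = {x, y} \<and> x \<noteq> y \<and> x \<in> V \<and> y \<in> V"
  proof (cases "e \<in> E")
    case True thus ?thesis using sg by (simp add: simple_graph_def)
  next
    case False
    then obtain w H where w: "e = {u, w}" "w \<noteq> u" "H \<in> holes_at V E u" "w \<in> H"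
      using e unfolding local_chordalize_def by blast
    have "H \<subseteq> V" "u \<in> H" using w(3) unfolding holes_at_def holes_def is_hole_def by auto
    thus ?thesis using w by blast
  qed
qed

lemma ipath_cong:
  assumes "\<And>x y. x \<in> set p \<Longrightarrow> y \<in> set p \<Longrightarrow> adj E x y = adj E' x y"
  shows "ipath E p = ipath E' p"
proof -
  have "\<forall>i<length p. \<forall>j<length p. adj E (p!i) (p!j) = adj E' (p!i) (p!j)"
    using assms by simp
  thus ?thesis unfolding ipath_def by simp
qed

lemma hole_cong:
  assumes "\<And>x y. x \<in> H \<Longrightarrow> y \<in> H \<Longrightarrow> {x,y} \<in> E \<longleftrightarrow> {x,y} \<in> E'"
  shows "is_hole V E H = is_hole V E' H"
proof -
  have "(\<forall>i < length xs. \<forall>j < length xs. {xs ! i, xs ! j} \<in> E \<longleftrightarrow> {xs ! i, xs ! j} \<in> E') "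
    if "set xs = H" for xs using assms that by auto
  hence "\<And>xs. set xs = H \<Longrightarrow> (\<forall>i < length xs. \<forall>j < length xs.
        {xs ! i, xs ! j} \<in> E \<longleftrightarrow> (j = Suc i mod length xs \<or> i = Suc j mod length xs)) =
       (\<forall>i < length xs. \<forall>j < length xs.
        {xs ! i, xs ! j} \<in> E' \<longleftrightarrow> (j = Suc i mod length xs \<or> i = Suc j mod length xs))"
    by metis
  thus ?thesis unfolding is_hole_def by (intro iff_exI) blast
qed

lemma Nb_hole: "is_hole V E H \<Longrightarrow> u \<in> H \<Longrightarrow> y \<in> H \<Longrightarrow> y \<noteq> u \<Longrightarrow> y \<in> Nb V E u"
  unfolding Nb_def holes_at_def holes_def by auto

lemma main_case:
  assumes sg: "simple_graph V E" and nc: "NC_vertex V E u"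
    and hp: "hdec (local_chordalize V E u) u p" and na: "\<not> adj E u (hd p)"
  shows False
proof -
  let ?E' = "local_chordalize V E u"
  have ip': "ipath ?E' p" and l3: "length p \<ge> 3" and un: "u \<notin> set p"
    and ua': "\<And>x. x \<in> set p \<Longrightarrow> adj ?E' u x \<longleftrightarrow> x = hd p \<or> x = last p"
    using hp by (auto simp: hdec_def)
  have ipE: "ipath E p" using ip'
    by (subst ipath_cong[of p E ?E']) (use un lc_adj_nu in metis)+
  have dp: "distinct p" using ipE by (simp add: ipath_def)
  have pne: "p \<noteq> []" using l3 by auto
  have hdp: "hd p = p!0" using pne by (simp add: hd_conv_nth)
  have lastp: "last p = p!(length p - 1)" using pne by (simp add: last_conv_nth)
  define a where "a = p!0"
  have aN: "a \<in> Nb V E u"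
  proof -
    have "adj ?E' u a" using ua'[of a] pne hdp by (simp add: a_def)
    thus ?thesis using na hdp lc_adj[of V E u u a] unfolding a_def by auto
  qed
  then obtain Ha where Ha: "Ha \<in> holes_at V E u" "a \<in> Ha" "a \<noteq> u" unfolding Nb_def by blast
  have Hah: "is_hole V E Ha" "u \<in> Ha" using Ha(1) by (auto simp: holes_at_def holes_def)
  obtain q where q: "hdec E u q" "set q = Ha - {u}" using hole_dec[OF Hah] by blast
  obtain s where sq: "s < length q" "q!s = a" using q(2) Ha(2,3) by (metis Diff_iff in_set_conv_nth singletonD)
  have "\<not> adj E u (q!s)" using na sq hdp a_def by simp
  hence s: "0 < s" "Suc s < length q" using hdec_uadj[OF q(1) sq(1)] sq(1) by auto
  define y where "y = p!1"
  have "adj E (p!0) (p!Suc 0)" using ipath_nth_adj[OF ipE, of 0] l3 by simp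
  hence y1: "adj E y (q!s)" using sq unfolding y_def a_def by (simp add: adj_sym)
  have nE'y: "\<not> adj ?E' u y"
  proof -
    have "1 < length p" "0 < length p" "length p - 1 < length p" using l3 by auto
    hence "y \<noteq> p!0" "y \<noteq> p!(length p - 1)"
      using nth_eq_iff_index_eq[OF dp, of 1 0] nth_eq_iff_index_eq[OF dp, of 1 "length p - 1"] l3
      unfolding y_def by auto
    moreover have "y \<in> set p" using l3 unfolding y_def by simp
    ultimately show ?thesis using ua'[of y] hdp lastp by auto
  qed
  have yN: "y \<notin> Nb V E u" "\<not> adj E u y" using nE'y lc_adj[of V E u u y] by auto
  have yu: "y \<noteq> u" using un l3 unfolding y_def by auto
  have yq: "y \<notin> set q" using yN(1) q(2) Nb_hole[OF Hah(1) Hah(2), of y] yu by auto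
  have key: False if rs: "lwalk E rs" "rs \<noteq> []" "adj E y (hd rs)" "adj E u (last rs)"
    and av: "\<And>x. x \<in> set rs \<Longrightarrow> x \<noteq> u \<and> x \<noteq> q!s \<and> \<not> adj E x (q!s)" for rs
  proof -
    obtain H where "is_hole V E H" "u \<in> H" "y \<in> H"
      using coreX[OF sg nc q(1) s y1 yq yu yN(2) rs av] by blast
    hence "y \<in> Nb V E u" using yu by (intro Nb_hole)
    thus False using yN(1) by contradiction
  qed
  define D where "D = drop 2 p"
  have D1: "lwalk E D" unfolding D_def by (intro lwalk_drop ipath_lwalk ipE)
  have D2: "D \<noteq> []" using l3 unfolding D_def by simp
  have "hd D = p!2" using l3 unfolding D_def by (simp add: hd_drop_conv_nth)
  moreover have "adj E (p!1) (p!Suc 1)" using ipath_nth_adj[OF ipE, of 1] l3 by simp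
  ultimately have D3: "adj E y (hd D)" unfolding y_def by (simp add: numeral_2_eq_2)
  have D4: "last D = last p" using l3 unfolding D_def by simp
  note D = D1 D2 D3 D4
  have Dav: "x \<noteq> u \<and> x \<noteq> q!s \<and> \<not> adj E x (q!s)" if "x \<in> set D" for x
  proof -
    from in_set_drop_nth[OF that[unfolded D_def]]
    obtain j where j: "2 \<le> j" "j < length p" "x = p!j" by blast
    have "x \<noteq> u" using un j by auto
    moreover have "x \<noteq> p!0"
    proof -
      have "0 < length p" using pne by simp
      thus ?thesis using nth_eq_iff_index_eq[OF dp j(2), of 0] j by auto
    qed
    moreover have "\<not> adj E (p!j) (p!0)"
    proof -
      have "0 < length p" using pne by simp
      hence "adj E (p!j) (p!0) = (0 = Suc j \<or> j = Suc 0)" using ipE j(2) unfolding ipath_def by blast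
      thus ?thesis using j by simp
    qed
    hence "\<not> adj E x (p!0)" using j by simp
    ultimately show ?thesis using sq a_def by simp
  qed
  show False
  proof (cases "adj E u (last p)")
    case True thus False using key[OF D(1,2,3)] D(4) Dav by auto
  next
    case False
    define b where "b = last p"
    have bN: "b \<in> Nb V E u"
    proof -
      have "adj ?E' u b" using ua'[of b] pne unfolding b_def by simp
      thus ?thesis using False lc_adj[of V E u u b] unfolding b_def by auto
    qed
    then obtain Hb where Hb: "Hb \<in> holes_at V E u" "b \<in> Hb" "b \<noteq> u" unfolding Nb_def by blast
    have Hbh: "is_hole V E Hb" "u \<in> Hb" using Hb(1) by (auto simp: holes_at_def holes_def)
    obtain g where g: "hdec E u g" "set g = Hb - {u}" using hole_dec[OF Hbh] by blast
    obtain t where tg: "t < length g" "g!t = b" using g(2) Hb(2,3) by (metis Diff_iff in_set_conv_nth singletonD)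
    have "\<not> adj E u (g!t)" using False tg b_def by simp
    hence t: "0 < t" "Suc t < length g" using hdec_uadj[OF g(1) tg(1)] tg(1) by auto
    have ab: "a \<noteq> b" "\<not> adj E a b"
    proof -
      have "length p - 1 \<noteq> 0" using l3 by simp
      moreover have "0 < length p" "length p - 1 < length p" using pne by auto
      ultimately show "a \<noteq> b" using nth_eq_iff_index_eq[OF dp, of 0 "length p - 1"] lastp
        unfolding a_def b_def by auto
      have "0 < length p" "length p - 1 < length p" using pne by auto
      hence "adj E (p!0) (p!(length p - 1)) = (length p - 1 = Suc 0 \<or> 0 = Suc (length p - 1))"
        using ipE unfolding ipath_def by blast
      thus "\<not> adj E a b" using l3 lastp unfolding a_def b_def by simp
    qed
    have aav: "x \<noteq> u \<and> x \<noteq> g!t \<and> \<not> adj E x (g!t)" if "x \<in> set [a]" for x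
      using that ab tg Ha(3) by simp
    have orient: "\<exists>g' t'. hdec E u g' \<and> 0 < t' \<and> Suc t' < length g' \<and> g'!t' = b \<and>
        \<not> touch E [a] (set (drop (Suc t') g'))"
    proof (cases "touch E [a] (set (drop (Suc t) g))")
      case False thus ?thesis using g(1) t tg by blast
    next
      case tR: True
      show ?thesis
      proof (cases "touch E [a] (set (take t g))")
        case True
        from sep_touch[OF sg nc g(1) t lwalk_single _ aav True tR] show ?thesis by simp
      next
        case False
        let ?g = "rev g" and ?t = "length g - 1 - t"
        have "hdec E u ?g" using g(1) by (rule hdec_rev)
        moreover have "0 < ?t" "Suc ?t < length ?g" using t by auto
        moreover have "?g ! ?t = b" using t tg by (simp add: rev_nth)
        moreover have "drop (Suc ?t) ?g = rev (take t g)"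
        proof -
          have "Suc ?t = length g - t" using t by auto
          thus ?thesis using t by (simp add: drop_rev)
        qed
        ultimately show ?thesis using False by (intro exI[of _ ?g] exI[of _ ?t]) simp
      qed
    qed
    then obtain g' t' where g': "hdec E u g'" "0 < t'" "Suc t' < length g'" "g'!t' = b"
      "\<not> touch E [a] (set (drop (Suc t') g'))" by blast
    define R where "R = drop (Suc t') g'"
    have Rne: "R \<noteq> []" using g' by (simp add: R_def)
    have ipg: "ipath E g'" "u \<notin> set g'" "length g' \<ge> 3" using g'(1) by (auto simp: hdec_def)
    have lR: "lwalk E R" unfolding R_def by (intro lwalk_drop ipath_lwalk ipg(1))
    have hR: "hd R = g'!Suc t'" using g' by (simp add: R_def hd_drop_conv_nth)
    have "adj E (g'!t') (g'!Suc t')" using hdec_nth_adj[OF g'(1) g'(3)] .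
    hence jn: "adj E (last D) (hd R)" using D(4) g'(4) hR b_def by simp
    have lw: "lwalk E (D @ R)" using lwalk_append[OF D(1) lR D(2) Rne] jn by blast
    have "last (D @ R) = last g'" using Rne g' by (simp add: R_def)
    moreover have "adj E u (last g')"
    proof -
      have "g' \<noteq> []" using ipg(3) by auto
      hence "last g' \<in> set g'" by simp
      thus ?thesis using g'(1) unfolding hdec_def by blast
    qed
    ultimately have lu: "adj E u (last (D @ R))" by simp
    have hDR: "hd (D @ R) = hd D" using D(2) by simp
    have av2: "x \<noteq> u \<and> x \<noteq> q!s \<and> \<not> adj E x (q!s)" if "x \<in> set (D @ R)" for x
    proof (cases "x \<in> set D")
      case True thus ?thesis using Dav by blast
    next
      case False
      hence xR: "x \<in> set R" using that by simp
      have "x \<noteq> u" using xR ipg(2) by (auto simp: R_def dest: in_set_dropD)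
      moreover have "\<not> (a = x \<or> adj E a x)" using g'(5) xR unfolding touch_def R_def by auto
      ultimately show ?thesis using sq unfolding a_def by (auto simp: adj_sym)
    qed
    show False using key[OF lw _ _ lu av2] D(2,3) hDR by simp
  qed
qed



lemma hdec_p1:
  assumes "hdec E u p"
  shows "p!1 \<in> set p \<and> p!1 \<noteq> hd p \<and> p!1 \<noteq> last p \<and> p!1 \<noteq> u"
proof -
  have ip: "ipath E p" and l3: "length p \<ge> 3" and un: "u \<notin> set p" using assms by (auto simp: hdec_def)
  have dp: "distinct p" using ip by (simp add: ipath_def)
  have pne: "p \<noteq> []" using l3 by auto
  have i: "1 < length p" "0 < length p" "length p - 1 < length p" using l3 by auto
  have "p!1 \<noteq> p!0" "p!1 \<noteq> p!(length p - 1)"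
    using nth_eq_iff_index_eq[OF dp i(1) i(2)] nth_eq_iff_index_eq[OF dp i(1) i(3)] l3 by auto
  moreover have "p!1 \<in> set p" using i by simp
  ultimately show ?thesis using pne un by (auto simp: hd_conv_nth last_conv_nth)
qed

lemma step_no_u:
  assumes sg: "simple_graph V E" and nc: "NC_vertex V E u"
    and H: "is_hole V (local_chordalize V E u) H"
  shows "u \<notin> H"
proof
  assume uH: "u \<in> H"
  let ?E' = "local_chordalize V E u"
  obtain p where hp: "hdec ?E' u p" using hole_dec[OF H uH] by blast
  show False
  proof (cases "adj E u (hd p)")
    case False thus False using main_case[OF sg nc hp] by blast
  next
    case hd: True
    show False
    proof (cases "adj E u (last p)")
      case False
      have "hdec ?E' u (rev p)" using hp by (rule hdec_rev)
      moreover have "p \<noteq> []" using hp by (auto simp: hdec_def)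
      ultimately show False using main_case[OF sg nc, of "rev p"] False by (simp add: hd_rev)
    next
      case last: True
      have ip': "ipath ?E' p" and l3: "length p \<ge> 3" and un: "u \<notin> set p"
        and ua': "\<And>x. x \<in> set p \<Longrightarrow> adj ?E' u x \<longleftrightarrow> x = hd p \<or> x = last p"
        using hp by (auto simp: hdec_def)
      have ipE: "ipath E p" using ip'
        by (subst ipath_cong[of p E ?E']) (use un lc_adj_nu in metis)+
      have "hdec E u p" unfolding hdec_def
      proof (intro conjI ipE l3 un ballI)
        fix x assume x: "x \<in> set p"
        show "adj E u x \<longleftrightarrow> x = hd p \<or> x = last p"
        proof
          assume "adj E u x"
          hence "adj ?E' u x" using lc_adj by metis
          thus "x = hd p \<or> x = last p" using ua' x by blast
        qed (use hd last in auto)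
      qed
      hence hole: "is_hole V E (insert u (set p))" by (rule hdec_hole[OF sg])
      have p1: "p!1 \<in> set p" "p!1 \<noteq> hd p" "p!1 \<noteq> last p" "p!1 \<noteq> u" using hdec_p1[OF hp] by auto
      have "p!1 \<in> Nb V E u" by (rule Nb_hole[OF hole]) (use p1 in auto)
      hence "adj ?E' u (p!1)" using lc_adj by metis
      thus False using ua'[OF p1(1)] p1 by simp
    qed
  qed
qed

lemma step_holes:
  assumes sg: "simple_graph V E" and nc: "NC_vertex V E u"
    and H: "is_hole V (local_chordalize V E u) H"
  shows "is_hole V E H \<and> u \<notin> H"
proof -
  have uH: "u \<notin> H" using step_no_u[OF sg nc H] .
  have "is_hole V E H = is_hole V (local_chordalize V E u) H"
  proof (rule hole_cong)
    fix x y assume "x \<in> H" "y \<in> H"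
    hence "x \<noteq> u" "y \<noteq> u" using uH by auto
    thus "{x, y} \<in> E \<longleftrightarrow> {x, y} \<in> local_chordalize V E u" using lc_adj_nu[of x u y V E]
      by (simp add: adj_def)
  qed
  thus ?thesis using H uH by simp
qed

definition cinv :: "'a set \<Rightarrow> 'a set set \<Rightarrow> 'a set set \<Rightarrow> 'a set \<Rightarrow> bool" where
  "cinv V E E0 P \<longleftrightarrow> simple_graph V E0 \<and> E \<subseteq> E0 \<and>
     (\<forall>e\<in>E0 - E. \<exists>c\<in>P. \<exists>x. x \<noteq> c \<and> e = {c, x} \<and> (\<exists>H. is_hole V E H \<and> c \<in> H \<and> x \<in> H)) \<and>
     (\<forall>H. is_hole V E0 H \<longrightarrow> is_hole V E H \<and> H \<inter> P = {})"

lemma invD: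
  assumes "cinv V E E0 P"
  shows "simple_graph V E0" "E \<subseteq> E0"
    "\<And>e. e \<in> E0 - E \<Longrightarrow> \<exists>c\<in>P. \<exists>x. x \<noteq> c \<and> e = {c, x} \<and> (\<exists>H. is_hole V E H \<and> c \<in> H \<and> x \<in> H)"
    "\<And>H. is_hole V E0 H \<Longrightarrow> is_hole V E H" "\<And>H. is_hole V E0 H \<Longrightarrow> H \<inter> P = {}"
  using assms unfolding cinv_def by auto

lemma inv_hole_edges:
  assumes "cinv V E E0 P" "is_hole V E0 H"
  shows "hole_edges E0 H = hole_edges E H"
proof -
  have HP: "H \<inter> P = {}" using invD(5)[OF assms] .
  show ?thesis unfolding hole_edges_def
  proof (intro set_eqI iffI)
    fix e assume e: "e \<in> {e \<in> E0. e \<subseteq> H}"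
    show "e \<in> {e \<in> E. e \<subseteq> H}"
    proof (rule ccontr)
      assume "e \<notin> {e \<in> E. e \<subseteq> H}"
      hence "e \<in> E0 - E" using e by auto
      then obtain c x where "c \<in> P" "e = {c, x}" using invD(3)[OF assms(1)] by blast
      thus False using e HP by auto
    qed
  next
    fix e assume "e \<in> {e \<in> E. e \<subseteq> H}"
    thus "e \<in> {e \<in> E0. e \<subseteq> H}" using invD(2)[OF assms(1)] by auto
  qed
qed

lemma inv_NC:
  assumes "cinv V E E0 P" "NC_vertex V E u"
  shows "NC_vertex V E0 u"
  unfolding NC_vertex_def
proof
  assume "\<exists>H\<in>holes_at V E0 u. \<exists>H'\<in>holes V E0 - holes_at V E0 u. share_consec_edges E0 H H'"
  then obtain H H' where H: "is_hole V E0 H" "u \<in> H" and H': "is_hole V E0 H'" "u \<notin> H'"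
    and sh: "share_consec_edges E0 H H'" unfolding holes_at_def holes_def by auto
  have "hole_edges E0 H = hole_edges E H" "hole_edges E0 H' = hole_edges E H'"
    using inv_hole_edges[OF assms(1)] H(1) H'(1) by auto
  hence "share_consec_edges E H H'" using sh unfolding share_consec_edges_def by simp
  moreover have "is_hole V E H" "is_hole V E H'" using invD(4)[OF assms(1)] H(1) H'(1) by auto
  ultimately show False using assms(2) H(2) H'(2) unfolding NC_vertex_def holes_at_def holes_def by blast
qed

lemma inv_step:
  assumes I: "cinv V E E0 P" and nc: "NC_vertex V E u"
  shows "cinv V E (local_chordalize V E0 u) (insert u P)"
proof -
  have sg0: "simple_graph V E0" using invD(1)[OF I] .
  have nc0: "NC_vertex V E0 u" using inv_NC[OF I nc] .
  let ?E1 = "local_chordalize V E0 u"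
  have "simple_graph V ?E1" using lc_sg[OF sg0] .
  moreover have "E \<subseteq> ?E1" using invD(2)[OF I] unfolding local_chordalize_def by auto
  moreover have "\<forall>e\<in>?E1 - E. \<exists>c\<in>insert u P. \<exists>x. x \<noteq> c \<and> e = {c, x} \<and> (\<exists>H. is_hole V E H \<and> c \<in> H \<and> x \<in> H)"
  proof
    fix e assume e: "e \<in> ?E1 - E"
    show "\<exists>c\<in>insert u P. \<exists>x. x \<noteq> c \<and> e = {c, x} \<and> (\<exists>H. is_hole V E H \<and> c \<in> H \<and> x \<in> H)"
    proof (cases "e \<in> E0")
      case True
      hence "e \<in> E0 - E" using e by blast
      from invD(3)[OF I this] show ?thesis by blast
    next
      case False
      then obtain w H where w: "e = {u, w}" "w \<noteq> u" "H \<in> holes_at V E0 u" "w \<in> H"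
        using e unfolding local_chordalize_def by blast
      have "is_hole V E0 H" "u \<in> H" using w(3) unfolding holes_at_def holes_def by auto
      hence "is_hole V E H" using invD(4)[OF I] by blast
      thus ?thesis using w \<open>u \<in> H\<close> by blast
    qed
  qed
  moreover have "\<forall>H. is_hole V ?E1 H \<longrightarrow> is_hole V E H \<and> H \<inter> insert u P = {}"
  proof (intro allI impI)
    fix H assume "is_hole V ?E1 H"
    hence "is_hole V E0 H" "u \<notin> H" using step_holes[OF sg0 nc0] by auto
    thus "is_hole V E H \<and> H \<inter> insert u P = {}" using invD(4,5)[OF I] by blast
  qed
  ultimately show ?thesis unfolding cinv_def by (intro conjI) auto
qed

lemma inv_seq:
  assumes "cinv V E E0 P" "\<forall>c\<in>set cs. NC_vertex V E c"
  shows "cinv V E (chordalize_seq V E0 cs) (P \<union> set cs)"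
  using assms
proof (induction cs arbitrary: E0 P)
  case Nil thus ?case by simp
next
  case (Cons c cs)
  have "cinv V E (local_chordalize V E0 c) (insert c P)" using inv_step[OF Cons.prems(1)] Cons.prems(2) by simp
  from Cons.IH[OF this] Cons.prems(2) show ?case by simp
qed

lemma inv_init: "simple_graph V E \<Longrightarrow> cinv V E E {}"
  unfolding cinv_def by simp



lemma seg_nth: "k < n \<Longrightarrow> a + k < length q \<Longrightarrow> take n (drop a q) ! k = q!(a+k)"
  by simp

lemma in_set_seg: "x \<in> set (take n (drop a q)) \<Longrightarrow> \<exists>k. a \<le> k \<and> k < a + n \<and> k < length q \<and> x = q!k"
proof -
  assume "x \<in> set (take n (drop a q))"
  then obtain i where i: "i < length (take n (drop a q))" "x = take n (drop a q) ! i"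
    by (auto simp: in_set_conv_nth)
  thus ?thesis by (intro exI[of _ "a + i"]) auto
qed

lemma seg_walk:
  assumes "lwalk E q" "a \<le> b" "b < length q"
  shows "\<exists>ws. lwalk E ws \<and> ws \<noteq> [] \<and> hd ws = q!a \<and> last ws = q!b \<and> (\<forall>x\<in>set ws. \<exists>k. a \<le> k \<and> k \<le> b \<and> x = q!k)"
proof -
  let ?ws = "take (b - a + 1) (drop a q)"
  have "lwalk E ?ws" using assms(1) by (intro lwalk_take lwalk_drop)
  moreover have "?ws \<noteq> []" using assms by simp
  moreover have "hd ?ws = q!a" using assms by (simp add: hd_conv_nth)
  moreover have "last ?ws = q!b"
  proof -
    have "length ?ws = b - a + 1" using assms by simp
    hence "last ?ws = ?ws ! (b - a)" using \<open>?ws \<noteq> []\<close> by (simp add: last_conv_nth)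
    also have "\<dots> = q!b" using assms by simp
    finally show ?thesis .
  qed
  moreover have "\<forall>x\<in>set ?ws. \<exists>k. a \<le> k \<and> k \<le> b \<and> x = q!k"
  proof
    fix x assume "x \<in> set ?ws"
    from in_set_seg[OF this] obtain k where "a \<le> k" "k < a + (b - a + 1)" "x = q!k" by blast
    thus "\<exists>k. a \<le> k \<and> k \<le> b \<and> x = q!k" using assms(2) by (intro exI[of _ k]) auto
  qed
  ultimately show ?thesis by blast
qed

lemma exits:
  assumes "Q (q!0)" "Q (q!(length q - 1))" "\<not> Q (q!iv)" "iv < length q"
  shows "\<exists>i' i. i' < iv \<and> iv < i \<and> i < length q \<and> Q (q!i') \<and> Q (q!i) \<and> (\<forall>k. i' < k \<and> k < i \<longrightarrow> \<not> Q (q!k))"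
proof -
  have iv0: "iv \<noteq> 0" using assms(1,3) by (metis)
  have ivl: "iv \<noteq> length q - 1" using assms by auto
  hence ivl': "iv < length q - 1" using assms(4) by simp
  have ex1: "\<exists>i. iv < i \<and> i < length q \<and> Q (q!i)" using ivl' assms(2) by (intro exI[of _ "length q - 1"]) auto
  define i where "i = (LEAST i. iv < i \<and> i < length q \<and> Q (q!i))"
  have i: "iv < i \<and> i < length q \<and> Q (q!i)" unfolding i_def by (rule LeastI_ex[OF ex1])
  have imin: "\<not> (iv < k \<and> k < length q \<and> Q (q!k))" if "k < i" for k
    using not_less_Least[of k "\<lambda>i. iv < i \<and> i < length q \<and> Q (q!i)"] that unfolding i_def by blast
  define i' where "i' = (GREATEST i. i < iv \<and> Q (q!i))"
  have i': "i' < iv \<and> Q (q!i')"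
    unfolding i'_def by (rule GreatestI_nat[of _ 0 iv]) (use iv0 assms(1) in auto)
  have imax: "k \<le> i'" if "k < iv" "Q (q!k)" for k
    unfolding i'_def by (rule Greatest_le_nat[of _ k iv]) (use that in auto)
  have "\<forall>k. i' < k \<and> k < i \<longrightarrow> \<not> Q (q!k)"
  proof (intro allI impI)
    fix k assume k: "i' < k \<and> k < i"
    show "\<not> Q (q!k)"
    proof (cases "k < iv")
      case True thus ?thesis using imax[of k] k by auto
    next
      case False
      show ?thesis
      proof (cases "k = iv")
        case True thus ?thesis using assms(3) by simp
      next
        case False
        hence "iv < k" using \<open>\<not> k < iv\<close> by simp
        thus ?thesis using imin[of k] k i by auto
      qed
    qed
  qed
  thus ?thesis using i i' by blast
qed

lemma exit_walk:
  assumes q: "lwalk E q" and idx: "i' < iv" "iv < i" "i < length q"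
    and Zk: "\<And>k. i' < k \<Longrightarrow> k < i \<Longrightarrow> Z (q!k)" and c: "c = i' \<or> c = i"
  shows "\<exists>ws. lwalk E ws \<and> ws \<noteq> [] \<and> hd ws = q!iv \<and> last ws = q!c \<and> (\<forall>x\<in>set ws. x = q!c \<or> Z x)"
  using c
proof
  assume c: "c = i'"
  obtain ws where ws: "lwalk E ws" "ws \<noteq> []" "hd ws = q!i'" "last ws = q!iv"
    "\<forall>x\<in>set ws. \<exists>k. i' \<le> k \<and> k \<le> iv \<and> x = q!k"
    using seg_walk[OF q, of i' iv] idx by auto
  have "lwalk E (rev ws)" using ws(1) by (rule lwalk_rev)
  moreover have "rev ws \<noteq> []" "hd (rev ws) = q!iv" "last (rev ws) = q!c" using ws c by (auto simp: hd_rev last_rev)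
  moreover have "\<forall>x\<in>set (rev ws). x = q!c \<or> Z x"
  proof
    fix x assume "x \<in> set (rev ws)"
    then obtain k where k: "i' \<le> k" "k \<le> iv" "x = q!k" using ws(5) by auto
    show "x = q!c \<or> Z x"
    proof (cases "k = i'")
      case True thus ?thesis using k c by simp
    next
      case False thus ?thesis using Zk[of k] k idx by auto
    qed
  qed
  ultimately show ?thesis by blast
next
  assume c: "c = i"
  obtain ws where ws: "lwalk E ws" "ws \<noteq> []" "hd ws = q!iv" "last ws = q!i"
    "\<forall>x\<in>set ws. \<exists>k. iv \<le> k \<and> k \<le> i \<and> x = q!k"
    using seg_walk[OF q, of iv i] idx by auto
  moreover have "\<forall>x\<in>set ws. x = q!c \<or> Z x"
  proof
    fix x assume "x \<in> set ws"
    then obtain k where k: "iv \<le> k" "k \<le> i" "x = q!k" using ws(5) by auto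
    show "x = q!c \<or> Z x"
    proof (cases "k = i")
      case True thus ?thesis using k c by simp
    next
      case False thus ?thesis using Zk[of k] k idx by auto
    qed
  qed
  ultimately show ?thesis using c by blast
qed

lemma both_exits:
  assumes sg: "simple_graph V E" and ncw: "NC_vertex V E w" and h: "hdec E u q"
    and wq: "w \<notin> set q" and wu: "w \<noteq> u"
    and idx: "i' < iv" "iv < i" "i < length q"
    and aw: "adj E w (q!i')" "adj E w (q!i)"
    and int: "\<And>k. i' < k \<Longrightarrow> k < i \<Longrightarrow> \<not> adj E w (q!k)"
  shows False
proof -
  have ipq: "ipath E q" and un: "u \<notin> set q" using h by (auto simp: hdec_def)
  have dq: "distinct q" using ipq by (simp add: ipath_def)
  define S where "S = take (i - i' + 1) (drop i' q)"
  have lS: "length S = i - i' + 1" using idx by (simp add: S_def)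
  have Sn: "S!k = q!(i'+k)" if "k \<le> i - i'" for k using that idx by (simp add: S_def)
  have Sset: "\<exists>k. i' \<le> k \<and> k \<le> i \<and> x = q!k" if "x \<in> set S" for x
  proof -
    from in_set_seg[OF that[unfolded S_def]] obtain k where "i' \<le> k" "k < i' + (i - i' + 1)" "x = q!k" by blast
    thus ?thesis using idx by (intro exI[of _ k]) auto
  qed
  have Sne: "S \<noteq> []" using lS by auto
  have hdS: "hd S = q!i'" using Sn[of 0] Sne by (simp add: hd_conv_nth)
  have lastS: "last S = q!i" using Sn[of "i - i'"] Sne lS idx by (simp add: last_conv_nth)
  have ipS: "ipath E S" unfolding S_def by (intro ipath_take ipath_drop ipq)
  have hS: "hdec E w S" unfolding hdec_def
  proof (intro conjI ipS ballI)
    show "3 \<le> length S" using lS idx by simp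
    show "w \<notin> set S" using wq by (auto simp: S_def dest: in_set_takeD in_set_dropD)
    fix x assume x: "x \<in> set S"
    then obtain k where k: "i' \<le> k" "k \<le> i" "x = q!k" using Sset by blast
    show "adj E w x \<longleftrightarrow> x = hd S \<or> x = last S"
    proof (cases "k = i' \<or> k = i")
      case True thus ?thesis using k aw hdS lastS by auto
    next
      case False
      have "x \<noteq> q!i'" "x \<noteq> q!i"
        using nth_eq_iff_index_eq[OF dq, of k i'] nth_eq_iff_index_eq[OF dq, of k i] k idx False by auto
      thus ?thesis using int[of k] k False hdS lastS by auto
    qed
  qed
  have H': "is_hole V E (insert w (set S))" by (rule hdec_hole[OF sg hS])
  have Hu: "is_hole V E (insert u (set q))" by (rule hdec_hole[OF sg h])
  have memS: "q!m \<in> set S" if "i' \<le> m" "m \<le> i" for m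
  proof -
    have "m - i' \<le> i - i'" "m - i' < length S" using that lS by auto
    have "S!(m - i') \<in> set S" using \<open>m - i' < length S\<close> by (rule nth_mem)
    moreover have "S!(m - i') = q!(i' + (m - i'))" using \<open>m - i' \<le> i - i'\<close> by (rule Sn)
    moreover have "i' + (m - i') = m" using that by simp
    ultimately show ?thesis by metis
  qed
  have mem: "q!(iv-1) \<in> set S" "q!iv \<in> set S" "q!Suc iv \<in> set S"
    using memS idx by auto
  have ne: "q!(iv-1) \<noteq> q!Suc iv" using nth_eq_iff_index_eq[OF dq, of "iv-1" "Suc iv"] idx by auto
  have e1: "adj E (q!(iv-1)) (q!iv)" using hdec_nth_adj[OF h, of "iv-1"] idx by auto
  have e2: "adj E (q!iv) (q!Suc iv)" using hdec_nth_adj[OF h, of iv] idx by auto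
  have inq: "q!(iv-1) \<in> set q" "q!iv \<in> set q" "q!Suc iv \<in> set q" using idx by auto
  have "share_consec_edges E (insert w (set S)) (insert u (set q))"
    unfolding share_consec_edges_def hole_edges_def
    apply (rule exI[of _ "q!(iv-1)"], rule exI[of _ "q!iv"], rule exI[of _ "q!Suc iv"])
    using ne e1 e2 mem inq by (auto simp: adj_def)
  moreover have "insert w (set S) \<in> holes_at V E w" using H' by (simp add: holes_at_def holes_def)
  moreover have "insert u (set q) \<in> holes V E - holes_at V E w" using Hu wq wu
    by (simp add: holes_at_def holes_def)
  ultimately show False using ncw unfolding NC_vertex_def by blast
qed



lemma ipath_single: "loopfree E \<Longrightarrow> ipath E [w]"
  unfolding ipath_def using loopfree_adj by fastforce

lemma final_core:
  assumes sg: "simple_graph V E" and ncu: "NC_vertex V E u" and ncw: "NC_vertex V E w"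
    and card1: "\<And>H. is_hole V E H \<Longrightarrow> u \<in> H \<Longrightarrow> w \<in> H \<Longrightarrow> False"
    and uw: "adj E u w" "u \<noteq> w"
    and Hu: "is_hole V E Hu" "u \<in> Hu" "v \<in> Hu"
    and Hw: "is_hole V E Hw" "w \<in> Hw" "v \<in> Hw"
    and v: "v \<noteq> u" "v \<noteq> w" "\<not> adj E u v" "\<not> adj E w v"
  shows False
proof -
  have lf: "loopfree E" using sg by (rule sg_loopfree)
  obtain q1 where q1: "hdec E u q1" "set q1 = Hu - {u}" using hole_dec[OF Hu(1,2)] by blast
  obtain q2 where q2: "hdec E w q2" "set q2 = Hw - {w}" using hole_dec[OF Hw(1,2)] by blast
  have wq1: "w \<notin> set q1" using card1[OF Hu(1,2)] q1(2) by auto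
  have uq2: "u \<notin> set q2" using card1[OF Hw(1) _ Hw(2)] q2(2) by auto
  have uq1: "u \<notin> set q1" and wq2: "w \<notin> set q2" using q1(2) q2(2) by auto
  define Z where "Z x \<longleftrightarrow> x \<noteq> u \<and> x \<noteq> w \<and> \<not> adj E u x \<and> \<not> adj E w x" for x
  have vZ: "Z v" using v unfolding Z_def by (auto simp: adj_sym)
  have l1: "length q1 \<ge> 3" and l2: "length q2 \<ge> 3" using q1(1) q2(1) by (auto simp: hdec_def)
  obtain iv1 where iv1: "iv1 < length q1" "q1!iv1 = v" using q1(2) Hu(3) v(1) by (metis Diff_iff in_set_conv_nth singletonD)
  obtain iv2 where iv2: "iv2 < length q2" "q2!iv2 = v" using q2(2) Hw(3) v(2) by (metis Diff_iff in_set_conv_nth singletonD)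
  have "0 < length q1" "length q1 - 1 < length q1" "0 < length q2" "length q2 - 1 < length q2" using l1 l2 by auto
  hence e1: "\<not> Z (q1!0)" "\<not> Z (q1!(length q1 - 1))"
    and e2: "\<not> Z (q2!0)" "\<not> Z (q2!(length q2 - 1))"
    using hdec_uadj[OF q1(1), of 0] hdec_uadj[OF q1(1), of "length q1 - 1"]
      hdec_uadj[OF q2(1), of 0] hdec_uadj[OF q2(1), of "length q2 - 1"] unfolding Z_def by (auto simp: adj_sym)
  obtain a1 b1 where ab1: "a1 < iv1" "iv1 < b1" "b1 < length q1" "\<not> Z (q1!a1)" "\<not> Z (q1!b1)"
    "\<forall>k. a1 < k \<and> k < b1 \<longrightarrow> Z (q1!k)"
    using exits[of "\<lambda>x. \<not> Z x" q1 iv1] e1 vZ iv1 by auto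
  obtain a2 b2 where ab2: "a2 < iv2" "iv2 < b2" "b2 < length q2" "\<not> Z (q2!a2)" "\<not> Z (q2!b2)"
    "\<forall>k. a2 < k \<and> k < b2 \<longrightarrow> Z (q2!k)"
    using exits[of "\<lambda>x. \<not> Z x" q2 iv2] e2 vZ iv2 by auto
  have ex1: "adj E u (q1!c) \<or> adj E w (q1!c)" if "c < length q1" "\<not> Z (q1!c)" for c
  proof -
    have "q1!c \<noteq> u" "q1!c \<noteq> w" using that uq1 wq1 by (auto dest: nth_mem)
    thus ?thesis using that(2) unfolding Z_def by (auto simp: adj_sym)
  qed
  have ex2: "adj E u (q2!c) \<or> adj E w (q2!c)" if "c < length q2" "\<not> Z (q2!c)" for c
  proof -
    have "q2!c \<noteq> u" "q2!c \<noteq> w" using that uq2 wq2 by (auto dest: nth_mem)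
    thus ?thesis using that(2) unfolding Z_def by (auto simp: adj_sym)
  qed
  have notA: "\<not> (adj E w (q1!a1) \<and> adj E w (q1!b1))"
  proof
    assume a: "adj E w (q1!a1) \<and> adj E w (q1!b1)"
    have "\<not> adj E w (q1!k)" if "a1 < k" "k < b1" for k using ab1(6) that unfolding Z_def by blast
    thus False using both_exits[OF sg ncw q1(1) wq1 uw(2)[symmetric] ab1(1,2,3)] a by blast
  qed
  have notB: "\<not> (adj E u (q2!a2) \<and> adj E u (q2!b2))"
  proof
    assume a: "adj E u (q2!a2) \<and> adj E u (q2!b2)"
    have "\<not> adj E u (q2!k)" if "a2 < k" "k < b2" for k using ab2(6) that unfolding Z_def by blast
    thus False using both_exits[OF sg ncu q2(1) uq2 uw(2) ab2(1,2,3)] a by blast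
  qed
  obtain ca where ca: "ca = a1 \<or> ca = b1" "\<not> adj E w (q1!ca)" "adj E u (q1!ca)"
    using notA ex1[of a1] ex1[of b1] ab1 by auto
  obtain cb where cb: "cb = a2 \<or> cb = b2" "\<not> adj E u (q2!cb)" "adj E w (q2!cb)"
    using notB ex2[of a2] ex2[of b2] ab2 by auto
  define \<alpha> where "\<alpha> = q1!ca"
  define \<beta> where "\<beta> = q2!cb"
  have ZK1: "Z (q1!k)" if "a1 < k" "k < b1" for k using ab1(6) that by blast
  have ZK2: "Z (q2!k)" if "a2 < k" "k < b2" for k using ab2(6) that by blast
  obtain w1 where w1: "lwalk E w1" "w1 \<noteq> []" "hd w1 = v" "last w1 = \<alpha>" "\<forall>x\<in>set w1. x = \<alpha> \<or> Z x"
    using exit_walk[OF ipath_lwalk ab1(1,2,3), of E Z ca] q1(1) ZK1 ca(1) iv1(2) unfolding \<alpha>_def hdec_def by blast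
  obtain w2 where w2: "lwalk E w2" "w2 \<noteq> []" "hd w2 = v" "last w2 = \<beta>" "\<forall>x\<in>set w2. x = \<beta> \<or> Z x"
    using exit_walk[OF ipath_lwalk ab2(1,2,3), of E Z cb] q2(1) ZK2 cb(1) iv2(2) unfolding \<beta>_def hdec_def by blast
  let ?W = "rev w1 @ w2"
  have W: "lwalk E ?W" using lwalk_append[OF lwalk_rev[OF w1(1)] w2(1)] w1(2,3) w2(2,3) by (simp add: last_rev)
  have Wne: "?W \<noteq> []" using w2 by simp
  obtain ys where ys: "ipath E ys" "ys \<noteq> []" "hd ys = hd ?W" "last ys = last ?W" "set ys \<subseteq> set ?W"
    using shortest[OF lf W Wne] by blast
  have hy: "hd ys = \<alpha>" using ys(3) w1(2,4) by (simp add: hd_rev)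
  have ly: "last ys = \<beta>" using ys(4) w2(2,4) by simp
  have yZ: "x = \<alpha> \<or> x = \<beta> \<or> Z x" if "x \<in> set ys" for x using that ys(5) w1(5) w2(5) by auto
  have ab: "\<alpha> \<noteq> \<beta>" using ca(3) cb(2) unfolding \<alpha>_def \<beta>_def by auto
  have \<alpha>q: "\<alpha> \<in> set q1" using ca(1) ab1 unfolding \<alpha>_def by auto
  have \<beta>q: "\<beta> \<in> set q2" using cb(1) ab2 unfolding \<beta>_def by auto
  have ly2: "length ys \<ge> 2"
  proof (rule ccontr)
    assume "\<not> length ys \<ge> 2"
    moreover have "length ys \<noteq> 0" using ys(2) by simp
    ultimately have "length ys = 1" by linarith
    hence "hd ys = last ys" by (cases ys) (auto simp: length_0_conv)
    thus False using hy ly ab by simp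
  qed
  have wys: "w \<notin> set ys"
  proof
    assume "w \<in> set ys"
    hence "w = \<alpha> \<or> w = \<beta> \<or> Z w" using yZ by blast
    thus False using \<alpha>q \<beta>q wq1 wq2 unfolding Z_def by auto
  qed
  let ?P = "ys @ [w]"
  have ipP: "ipath E ?P"
  proof (rule ipath_append[OF ys(1) ipath_single[OF lf]])
    show "set ys \<inter> set [w] = {}" using wys by simp
    show "ys \<noteq> []" "[w] \<noteq> []" using ys(2) by auto
    show "adj E (last ys) (hd [w])" using ly cb(3) unfolding \<beta>_def by (simp add: adj_sym)
    fix x z assume x: "x \<in> set ys" and z: "z \<in> set [w]" and a: "adj E x z"
    have zw: "z = w" using z by simp
    have "x = \<beta>"
    proof -
      have "x = \<alpha> \<or> x = \<beta> \<or> Z x" using yZ x by blast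
      moreover have "\<not> adj E x w" if "x = \<alpha>" using that ca(2) unfolding \<alpha>_def by (simp add: adj_sym)
      moreover have "\<not> adj E x w" if "Z x" using that unfolding Z_def by (simp add: adj_sym)
      ultimately show ?thesis using a zw by blast
    qed
    thus "x = last ys \<and> z = hd [w]" using ly zw by simp
  qed
  have hP: "hdec E u ?P" unfolding hdec_def
  proof (intro conjI ipP ballI)
    show "3 \<le> length ?P" using ly2 by simp
    have "u \<notin> set ys"
    proof
      assume "u \<in> set ys"
      hence "u = \<alpha> \<or> u = \<beta> \<or> Z u" using yZ by blast
      thus False using \<alpha>q \<beta>q uq1 uq2 unfolding Z_def by auto
    qed
    thus "u \<notin> set ?P" using uw(2) by simp
    fix x assume x: "x \<in> set ?P"
    have hdP: "hd ?P = \<alpha>" using hy ys(2) by simp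
    have lastP: "last ?P = w" by simp
    show "adj E u x \<longleftrightarrow> x = hd ?P \<or> x = last ?P"
    proof (cases "x = w")
      case True thus ?thesis using uw(1) by simp
    next
      case False
      hence xy: "x \<in> set ys" using x by simp
      hence "x = \<alpha> \<or> x = \<beta> \<or> Z x" using yZ by blast
      moreover have "adj E u \<alpha>" using ca(3) unfolding \<alpha>_def .
      moreover have "\<not> adj E u \<beta>" using cb(2) unfolding \<beta>_def .
      moreover have "Z x \<Longrightarrow> \<not> adj E u x \<and> x \<noteq> \<alpha>" using ca(3) unfolding Z_def \<alpha>_def by auto
      ultimately show ?thesis using hdP lastP False ab by auto
    qed
  qed
  have "is_hole V E (insert u (set ?P))" by (rule hdec_hole[OF sg hP])
  moreover have "u \<in> insert u (set ?P)" "w \<in> insert u (set ?P)" by auto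
  ultimately show False using card1 by blast
qed



lemma hole_finite: "is_hole V E H \<Longrightarrow> finite H"
  unfolding is_hole_def by auto

theorem lemma2p5:
  fixes V :: "'a set" and E :: "'a set set" and C :: "'a set" and cs :: "'a list"
    and u w :: 'a
  assumes "simple_graph V E"
    and "hole_cover V E C"
    and "NC_set V E C"
    and "distinct cs" and "set cs = C"
    and "u \<in> C" and "w \<in> C" and "{u, w} \<in> E"
  shows "\<not> (\<exists>v. {u, v} \<in> chordalize_seq V E cs - E \<and> {w, v} \<in> chordalize_seq V E cs - E)"
proof
  assume "\<exists>v. {u, v} \<in> chordalize_seq V E cs - E \<and> {w, v} \<in> chordalize_seq V E cs - E"
  then obtain v where vu: "{u, v} \<in> chordalize_seq V E cs - E" and vw: "{w, v} \<in> chordalize_seq V E cs - E"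
    by blast
  note sg = assms(1)
  have ncC: "\<And>c. c \<in> C \<Longrightarrow> NC_vertex V E c" and cardC: "\<And>H. H \<in> holes V E \<Longrightarrow> card (H \<inter> C) \<le> 1"
    using assms(3) unfolding NC_set_def by auto
  have card2: False if "is_hole V E H" "a \<in> H" "b \<in> H" "a \<in> C" "b \<in> C" "a \<noteq> b" for H a b
  proof -
    have "finite (H \<inter> C)" using hole_finite[OF that(1)] by simp
    moreover have "{a, b} \<subseteq> H \<inter> C" using that by auto
    ultimately have "card {a, b} \<le> card (H \<inter> C)" by (rule card_mono)
    moreover have "card {a, b} = 2" using that(6) by simp
    moreover have "card (H \<inter> C) \<le> 1" using cardC[of H] that(1) by (simp add: holes_def)
    ultimately show False by simp
  qed
  have I: "cinv V E (chordalize_seq V E cs) ({} \<union> set cs)"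
    using inv_seq[OF inv_init[OF sg], of cs] ncC assms(5) by blast
  have newe: "\<exists>H. is_hole V E H \<and> x \<in> H \<and> v \<in> H \<and> v \<noteq> x"
    if x: "x \<in> C" "{x, v} \<in> chordalize_seq V E cs - E" for x
  proof -
    obtain c y H where c: "c \<in> C" "y \<noteq> c" "{x, v} = {c, y}" "is_hole V E H" "c \<in> H" "y \<in> H"
      using invD(3)[OF I x(2)] assms(5) by auto
    from c(3) have "(x = c \<and> v = y) \<or> (x = y \<and> v = c)" by (auto simp: doubleton_eq_iff)
    thus ?thesis
    proof
      assume "x = c \<and> v = y" thus ?thesis using c by blast
    next
      assume a: "x = y \<and> v = c"
      thus ?thesis using card2[OF c(4) c(5) c(6) c(1)] x(1) c(2) by auto
    qed
  qed
  obtain Hu where Hu: "is_hole V E Hu" "u \<in> Hu" "v \<in> Hu" "v \<noteq> u" using newe[OF assms(6) vu] by blast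
  obtain Hw where Hw: "is_hole V E Hw" "w \<in> Hw" "v \<in> Hw" "v \<noteq> w" using newe[OF assms(7) vw] by blast
  have uw: "adj E u w" using assms(8) by (simp add: adj_def)
  have uw2: "u \<noteq> w" using uw loopfree_adj[OF sg_loopfree[OF sg]] by metis
  have nuv: "\<not> adj E u v" "\<not> adj E w v" using vu vw by (auto simp: adj_def)
  show False
  proof (rule final_core[OF sg ncC[OF assms(6)] ncC[OF assms(7)] _ uw uw2 Hu(1,2,3) Hw(1,2,3) Hu(4) Hw(4) nuv])
    fix H assume "is_hole V E H" "u \<in> H" "w \<in> H"
    thus False using card2 assms(6,7) uw2 by blast
  qed
qed


end
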